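(* Assume the standing hypotheses of the context, let $\varepsilon\in(0,\varepsilon_0]$, let $\boldsymbol\rho\in\mathcal P_2(\mathbb R^d)^2$ and let $\mathcal S\subset\mathcal P_2(\mathbb R^d)^2$ be any family. Then: (1) $\int[F_1(\rho_1)+F_2(\rho_2)]dx\le2\mathcal E_\varepsilon(\boldsymbol\rho)$ and $\int\rho_1K*\rho_2\,dx\le\mathcal E_\varepsilon(\boldsymbol\rho)$; in particular $\mathcal E_\varepsilon$ is uniformly bounded on $\mathcal S$ iff both $F_j(\rho_j)$ ($j=1,2$) and $\rho_1K*\rho_2$ are uniformly bounded in $L^1(\mathbb R^d)$ for $\boldsymbol\rho\in\mathcal S$. (2) With constants $\alpha_j$ such that $F_j'(r)\le\alpha_j(\min\{1,r\}+F_j(r))$ for all $r\ge0$: $\int F_j'(\rho_j)\,dx\le\alpha_j(1+2\mathcal E_\varepsilon(\boldsymbol\rho))$. (3) If $\boldsymbol\rho\in\mathfrak X_0$, then $\frac\lambda2(\mathfrak m_2[\rho_1]+\mathfrak m_2[\rho_2])\le\int\rho_1K*\rho_2\,dx\le C_K(\mathfrak m_2[\rho_1]+\mathfrak m_2[\rho_2])$; in particular, for $\mathcal S\subset\mathfrak X_0$ the interaction energy is uniformly bounded on $\mathcal S$ iff the second moments of $\rho_1,\rho_2$ are uniformly bounded for $\boldsymbol\rho\in\mathcal S$.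
   Context: Let $d\ge1$. Standing hypotheses. (K): $K:\mathbb R^d\to[0,\infty)$ radially symmetric, $K(0)=0$, $K\in C^2$, $\nabla^2K\ge\lambda\,\mathrm{Id}$ for some $\lambda>0$, $\|\nabla^2K\|\le C_K$. (F): for $j=1,2$, $F_j:[0,\infty)\to[0,\infty)$ is $C^2$, $F_j''>0$ on $(0,\infty)$, $F_j(0)=F_j'(0)=0$, $\liminf_{r\to\infty}F_j''(r)>0$, $\limsup_{r\to\infty}F_j'(r)/F_j(r)<\infty$; there are $m_j,M_j>0,\beta_j\ge0,r_0>0$ with $m_jr^{\beta_j}\le F_j''(r)\le M_jr^{\beta_j}$ on $[0,r_0]$; $F_j(r)-rF_j'(r)+r^2F_j''(r)\ge0$. (h): $h:[0,\infty)^2\to\mathbb R$ is $C^2$, $h$ and $\nabla h$ vanish on $\{r_1=0\}\cup\{r_2=0\}$. ($\theta$): with $\theta_{j,i}(\mathbf u)=\partial_{r_i}\partial_{r_j}h(\mathbf r)/F_i''(r_i)$, $r_k=(F_k')^{-1}(u_k)$, each $\theta_{j,i}$ is locally Lipschitz on $[0,\infty)^2$ and $|\theta_{j,i}(\mathbf u)|\le\kappa_{j,i}\min\{1,u_1,u_2,\sqrt{(F_i')^{-1}(u_i)/(F_j')^{-1}(u_j)}\}$ for constants $\kappa_{j,i}>0$. Notation: $\mathcal P_2(\mathbb R^d)$ probability measures with finite second moment (absolutely continuous ones identified with densities); $\mathfrak m_1[\rho]=\int x\rho$, $\mathfrak m_2[\rho]=\int|x|^2\rho$; $\mathfrak X_0=\{\boldsymbol\rho\in\mathcal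 P_2(\mathbb R^d)^2:\mathfrak m_1[\rho_1]+\mathfrak m_1[\rho_2]=0\}$; $\mathcal E_\varepsilon(\boldsymbol\rho)=\int[F_1(\rho_1)+F_2(\rho_2)+\varepsilon h(\rho_1,\rho_2)+\rho_1K*\rho_2]dx$, $=+\infty$ unless both components are absolutely continuous with integrand in $L^1$. $\varepsilon_0>0$ is a number such that $\mathbf r\mapsto F_1(r_1)+F_2(r_2)+2\varepsilon_0h(\mathbf r)$ is convex on $[0,\infty)^2$ (such a number exists under these hypotheses). *)

theory Defs
  imports "HOL-Probability.Probability"
begin

definition quadrant :: "(real \<times> real) set" where
  "quadrant = {0..} \<times> {0..}"

definition hyp_K :: "('a::euclidean_space \<Rightarrow> real) \<Rightarrow> ('a \<Rightarrow> 'a) \<Rightarrow> ('a \<Rightarrow> 'a \<Rightarrow>\<^sub>L 'a)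
    \<Rightarrow> real \<Rightarrow> real \<Rightarrow> bool" where
  "hyp_K K DK HK lam CK \<longleftrightarrow>
     (\<forall>x. 0 \<le> K x) \<and> (\<forall>x y. norm x = norm y \<longrightarrow> K x = K y) \<and> K 0 = 0 \<and>
     (\<forall>x. (K has_derivative (\<lambda>v. DK x \<bullet> v)) (at x)) \<and>
     (\<forall>x. (DK has_derivative blinfun_apply (HK x)) (at x)) \<and>
     continuous_on UNIV HK \<and>
     0 < lam \<and> (\<forall>x v. lam * (norm v)\<^sup>2 \<le> blinfun_apply (HK x) v \<bullet> v) \<and>
     (\<forall>x. norm (HK x) \<le> CK)"

text \<open>(F) for one function F with first and second derivative F' and F'' on [0,\<infinity>).
  The two-sided power bound on F'' is imposed on (0,r0]; at r = 0 it follows by continuity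
  of F'' (and avoids the Isabelle convention 0 powr 0 = 0).\<close>
definition hyp_F :: "(real \<Rightarrow> real) \<Rightarrow> (real \<Rightarrow> real) \<Rightarrow> (real \<Rightarrow> real) \<Rightarrow> bool" where
  "hyp_F F F' F'' \<longleftrightarrow>
     (\<forall>r\<ge>0. 0 \<le> F r) \<and>
     (\<forall>r\<ge>0. (F has_real_derivative F' r) (at r within {0..})) \<and>
     (\<forall>r\<ge>0. (F' has_real_derivative F'' r) (at r within {0..})) \<and>
     continuous_on {0..} F'' \<and>
     (\<forall>r>0. 0 < F'' r) \<and> F 0 = 0 \<and> F' 0 = 0 \<and>
     Liminf at_top (\<lambda>r. ereal (F'' r)) > 0 \<and>
     Limsup at_top (\<lambda>r. ereal (F' r / F r)) < \<infinity> \<and>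
     (\<exists>m M \<beta> r0. 0 < m \<and> 0 < M \<and> 0 \<le> \<beta> \<and> 0 < r0 \<and>
        (\<forall>r. 0 < r \<and> r \<le> r0 \<longrightarrow> m * r powr \<beta> \<le> F'' r \<and> F'' r \<le> M * r powr \<beta>)) \<and>
     (\<forall>r\<ge>0. F r - r * F' r + r\<^sup>2 * F'' r \<ge> 0)"

definition hyp_h :: "(real \<times> real \<Rightarrow> real) \<Rightarrow> (real \<times> real \<Rightarrow> real \<times> real)
    \<Rightarrow> (real \<times> real \<Rightarrow> (real \<times> real) \<Rightarrow>\<^sub>L (real \<times> real)) \<Rightarrow> bool" where
  "hyp_h h Dh Hh \<longleftrightarrow>
     (\<forall>r\<in>quadrant. (h has_derivative (\<lambda>v. Dh r \<bullet> v)) (at r within quadrant)) \<and>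
     (\<forall>r\<in>quadrant. (Dh has_derivative blinfun_apply (Hh r)) (at r within quadrant)) \<and>
     continuous_on quadrant Hh \<and>
     (\<forall>r\<in>quadrant. (fst r = 0 \<or> snd r = 0) \<longrightarrow> h r = 0 \<and> Dh r = 0)"

definition coord :: "nat \<Rightarrow> real \<times> real \<Rightarrow> real" where
  "coord i v = (if i = 1 then fst v else snd v)"

definition unitv :: "nat \<Rightarrow> real \<times> real" where
  "unitv i = (if i = 1 then (1, 0) else (0, 1))"

definition d2h :: "(real \<times> real \<Rightarrow> (real \<times> real) \<Rightarrow>\<^sub>L (real \<times> real)) \<Rightarrow> nat \<Rightarrow> nat
    \<Rightarrow> real \<times> real \<Rightarrow> real" where
  "d2h Hh i j r = blinfun_apply (Hh r) (unitv j) \<bullet> unitv i"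

definition rinv :: "(real \<Rightarrow> real) \<Rightarrow> (real \<Rightarrow> real) \<Rightarrow> real \<times> real \<Rightarrow> real \<times> real" where
  "rinv F1' F2' u = (the_inv_into {0..} F1' (fst u), the_inv_into {0..} F2' (snd u))"

text \<open>(theta): for all i,j in {1,2}, theta_{j,i}(u) = d_{r_i} d_{r_j} h(r) / F_i''(r_i) (where
  F_i''(r_i) > 0, i.e. u_i > 0) extends to a locally Lipschitz function on [0,\<infinity>)^2
  satisfying the stated bound.\<close>
definition hyp_theta :: "(real \<Rightarrow> real) \<Rightarrow> (real \<Rightarrow> real) \<Rightarrow> (real \<Rightarrow> real) \<Rightarrow> (real \<Rightarrow> real)
    \<Rightarrow> (real \<times> real \<Rightarrow> (real \<times> real) \<Rightarrow>\<^sub>L (real \<times> real)) \<Rightarrow> bool" where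
  "hyp_theta F1' F1'' F2' F2'' Hh \<longleftrightarrow>
     (\<forall>i\<in>{1::nat,2}. \<forall>j\<in>{1::nat,2}. \<exists>\<theta> :: real \<times> real \<Rightarrow> real. \<exists>\<kappa>::real. 0 < \<kappa> \<and>
        (\<forall>u\<in>quadrant. \<exists>e>0. \<exists>L. L-lipschitz_on (cball u e \<inter> quadrant) \<theta>) \<and>
        (\<forall>u\<in>quadrant. 0 < coord i u \<longrightarrow>
           \<theta> u = d2h Hh i j (rinv F1' F2' u) /
                 (if i = 1 then F1'' else F2'') (coord i (rinv F1' F2' u))) \<and>
        (\<forall>u\<in>quadrant. \<bar>\<theta> u\<bar> \<le> \<kappa> * min (min 1 (fst u)) (min (snd u)
            (sqrt (coord i (rinv F1' F2' u) / coord j (rinv F1' F2' u))))))"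

definition P2 :: "'a::euclidean_space measure \<Rightarrow> bool" where
  "P2 \<mu> \<longleftrightarrow> prob_space \<mu> \<and> sets \<mu> = sets borel \<and> integrable \<mu> (\<lambda>x. (norm x)\<^sup>2)"

definition mom1 :: "'a::euclidean_space measure \<Rightarrow> 'a" where
  "mom1 \<mu> = (\<integral>x. x \<partial>\<mu>)"

definition mom2 :: "'a::euclidean_space measure \<Rightarrow> real" where
  "mom2 \<mu> = (\<integral>x. (norm x)\<^sup>2 \<partial>\<mu>)"

definition X0 :: "('a::euclidean_space measure \<times> 'a measure) set" where
  "X0 = {p. P2 (fst p) \<and> P2 (snd p) \<and> mom1 (fst p) + mom1 (snd p) = 0}"

definition is_dens :: "'a::euclidean_space measure \<Rightarrow> ('a \<Rightarrow> real) \<Rightarrow> bool" where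
  "is_dens \<mu> f \<longleftrightarrow> f \<in> borel_measurable lborel \<and> (\<forall>x. 0 \<le> f x) \<and>
     \<mu> = density lborel (\<lambda>x. ennreal (f x))"

definition conv :: "('a::euclidean_space \<Rightarrow> real) \<Rightarrow> ('a \<Rightarrow> real) \<Rightarrow> 'a \<Rightarrow> real" where
  "conv K f x = (\<integral>y. K (x - y) * f y \<partial>lborel)"

text \<open>Interaction energy \<integral> \<rho>1 K*\<rho>2 = \<integral>\<integral> K(x-y) d\<rho>2(y) d\<rho>1(x) (for general measures).\<close>
definition inter :: "('a::euclidean_space \<Rightarrow> real) \<Rightarrow> 'a measure \<Rightarrow> 'a measure \<Rightarrow> ennreal" where
  "inter K \<mu> \<nu> = (\<integral>\<^sup>+ x. (\<integral>\<^sup>+ y. ennreal (K (x - y)) \<partial>\<nu>) \<partial>\<mu>)"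

definition integrand :: "(real \<Rightarrow> real) \<Rightarrow> (real \<Rightarrow> real) \<Rightarrow> (real \<times> real \<Rightarrow> real)
    \<Rightarrow> ('a::euclidean_space \<Rightarrow> real) \<Rightarrow> real \<Rightarrow> ('a \<Rightarrow> real) \<Rightarrow> ('a \<Rightarrow> real) \<Rightarrow> 'a \<Rightarrow> real" where
  "integrand F1 F2 h K \<epsilon> f1 f2 x =
     F1 (f1 x) + F2 (f2 x) + \<epsilon> * h (f1 x, f2 x) + f1 x * conv K f2 x"

definition energy :: "(real \<Rightarrow> real) \<Rightarrow> (real \<Rightarrow> real) \<Rightarrow> (real \<times> real \<Rightarrow> real)
    \<Rightarrow> ('a::euclidean_space \<Rightarrow> real) \<Rightarrow> real \<Rightarrow> 'a measure \<times> 'a measure \<Rightarrow> ereal" where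
  "energy F1 F2 h K \<epsilon> p =
     (if \<exists>f1 f2. is_dens (fst p) f1 \<and> is_dens (snd p) f2 \<and>
                 integrable lborel (integrand F1 F2 h K \<epsilon> f1 f2)
      then (let (f1, f2) = (SOME (f1, f2). is_dens (fst p) f1 \<and> is_dens (snd p) f2 \<and>
                 integrable lborel (integrand F1 F2 h K \<epsilon> f1 f2))
            in ereal (\<integral>x. integrand F1 F2 h K \<epsilon> f1 f2 x \<partial>lborel))
      else \<infinity>)"

end

theory Submission
  imports Defs
begin

lemma nonneg_second:
  fixes f g k :: "real \<Rightarrow> real" and a :: real
  assumes a: "0 \<le> a"
    and d1: "\<And>t. t \<in> {0..a} \<Longrightarrow> (f has_real_derivative g t) (at t within {0..a})"
    and d2: "\<And>t. t \<in> {0..a} \<Longrightarrow> (g has_real_derivative k t) (at t within {0..a})"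
    and p2: "\<And>t. 0 < t \<Longrightarrow> t < a \<Longrightarrow> 0 \<le> k t"
    and z: "f 0 = 0" "g 0 = 0"
  shows "0 \<le> f a"
proof -
  have c1: "continuous_on {0..a} f" by (rule DERIV_continuous_on[OF d1])
  have c2: "continuous_on {0..a} g" by (rule DERIV_continuous_on[OF d2])
  have m1: "0 \<le> g t" if "t \<in> {0..a}" for t
  proof -
    have "g 0 \<le> g t"
    proof (rule DERIV_nonneg_imp_increasing_open[of 0 t g])
      show "0 \<le> t" using that by auto
      show "continuous_on {0..t} g" using c2 that by (auto intro: continuous_on_subset)
      fix x assume x: "0 < x" "x < t"
      have "(g has_real_derivative k x) (at x within {0..a})" using d2 x that by auto
      then have "(g has_real_derivative k x) (at x)" using x that by (simp add: at_within_Icc_at)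
      then show "\<exists>y. (g has_real_derivative y) (at x) \<and> 0 \<le> y" using p2 x that by auto
    qed
    then show ?thesis using z by simp
  qed
  have "f 0 \<le> f a"
  proof (rule DERIV_nonneg_imp_increasing_open[of 0 a f])
    show "0 \<le> a" by fact
    show "continuous_on {0..a} f" by fact
    fix x assume x: "0 < x" "x < a"
    have "(f has_real_derivative g x) (at x within {0..a})" using d1 x by auto
    then have "(f has_real_derivative g x) (at x)" using x by (simp add: at_within_Icc_at)
    then show "\<exists>y. (f has_real_derivative y) (at x) \<and> 0 \<le> y" using m1 x by auto
  qed
  then show ?thesis using z by simp
qed

lemma K_line1:
  assumes hK: "hyp_K K DK HK lam CK"
  shows "((\<lambda>t. K (t *\<^sub>R z)) has_real_derivative (DK (t *\<^sub>R z) \<bullet> z)) (at t within S)"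
proof -
  have d: "(K has_derivative (\<lambda>v. DK (t *\<^sub>R z) \<bullet> v)) (at (t *\<^sub>R z))" using hK by (simp add: hyp_K_def)
  have l: "((\<lambda>t. t *\<^sub>R z) has_derivative (\<lambda>s. s *\<^sub>R z)) (at t within S)"
    by (auto intro!: derivative_eq_intros)
  have "((\<lambda>t. K (t *\<^sub>R z)) has_derivative (\<lambda>s. DK (t *\<^sub>R z) \<bullet> (s *\<^sub>R z))) (at t within S)"
    by (rule has_derivative_compose[OF l d])
  moreover have "(\<lambda>s. DK (t *\<^sub>R z) \<bullet> (s *\<^sub>R z)) = (*) (DK (t *\<^sub>R z) \<bullet> z)"
    by (auto simp: fun_eq_iff)
  ultimately show ?thesis unfolding has_field_derivative_def by simp
qed

lemma K_line2:
  assumes hK: "hyp_K K DK HK lam CK"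
  shows "((\<lambda>t. DK (t *\<^sub>R z) \<bullet> z) has_real_derivative (blinfun_apply (HK (t *\<^sub>R z)) z \<bullet> z)) (at t within S)"
proof -
  have d: "(DK has_derivative blinfun_apply (HK (t *\<^sub>R z))) (at (t *\<^sub>R z))" using hK by (simp add: hyp_K_def)
  have l: "((\<lambda>t. t *\<^sub>R z) has_derivative (\<lambda>s. s *\<^sub>R z)) (at t within S)"
    by (auto intro!: derivative_eq_intros)
  have "((\<lambda>t. DK (t *\<^sub>R z)) has_derivative (\<lambda>s. blinfun_apply (HK (t *\<^sub>R z)) (s *\<^sub>R z))) (at t within S)"
    by (rule has_derivative_compose[OF l d])
  then have "((\<lambda>t. DK (t *\<^sub>R z) \<bullet> z) has_derivative (\<lambda>s. blinfun_apply (HK (t *\<^sub>R z)) (s *\<^sub>R z) \<bullet> z)) (at t within S)"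
    by (rule has_derivative_inner_left)
  moreover have "(\<lambda>s. blinfun_apply (HK (t *\<^sub>R z)) (s *\<^sub>R z) \<bullet> z) = (*) (blinfun_apply (HK (t *\<^sub>R z)) z \<bullet> z)"
    by (auto simp: fun_eq_iff blinfun.scaleR_right)
  ultimately show ?thesis unfolding has_field_derivative_def by simp
qed

lemma DK0:
  assumes hK: "hyp_K K DK HK lam CK"
  shows "DK 0 = 0"
proof -
  have "DK 0 \<bullet> z = 0" for z
  proof -
    have d: "((\<lambda>t. K (t *\<^sub>R z)) has_real_derivative (DK (0 *\<^sub>R z) \<bullet> z)) (at 0)"
      using K_line1[OF hK] by blast
    have m: "\<forall>y. \<bar>0 - y\<bar> < 1 \<longrightarrow> K (0 *\<^sub>R z) \<le> K (y *\<^sub>R z)"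
      using hK by (simp add: hyp_K_def del: scale_zero_left)
    show ?thesis using DERIV_local_min[OF d zero_less_one m] by simp
  qed
  from this[of "DK 0"] show ?thesis by simp
qed

lemma K_bounds:
  assumes hK: "hyp_K K DK HK lam CK"
  shows "lam / 2 * (norm z)\<^sup>2 \<le> K z" "K z \<le> CK / 2 * (norm z)\<^sup>2"
proof -
  have H: "lam * (norm v)\<^sup>2 \<le> blinfun_apply (HK x) v \<bullet> v" "norm (HK x) \<le> CK" "K 0 = 0" for x v
    using hK by (auto simp: hyp_K_def)
  have HU: "blinfun_apply (HK x) v \<bullet> v \<le> CK * (norm v)\<^sup>2" for x v
  proof -
    have "blinfun_apply (HK x) v \<bullet> v \<le> norm (blinfun_apply (HK x) v) * norm v"
      by (rule order_trans[OF _ Cauchy_Schwarz_ineq2]) simp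
    also have "\<dots> \<le> norm (HK x) * norm v * norm v"
      by (intro mult_right_mono norm_blinfun) auto
    also have "\<dots> \<le> CK * norm v * norm v"
      by (intro mult_right_mono H(2)) auto
    finally show ?thesis by (simp add: power2_eq_square)
  qed
  have "0 \<le> (\<lambda>t. K (t *\<^sub>R z) - lam / 2 * t\<^sup>2 * (norm z)\<^sup>2) 1"
  proof (rule nonneg_second[where a=1 and f="\<lambda>t. K (t *\<^sub>R z) - lam / 2 * t\<^sup>2 * (norm z)\<^sup>2" and g = "\<lambda>t. DK (t *\<^sub>R z) \<bullet> z - lam * t * (norm z)\<^sup>2"
        and k = "\<lambda>t. blinfun_apply (HK (t *\<^sub>R z)) z \<bullet> z - lam * (norm z)\<^sup>2"])
    show "\<And>t. t \<in> {0..1} \<Longrightarrow> ((\<lambda>t. K (t *\<^sub>R z) - lam / 2 * t\<^sup>2 * (norm z)\<^sup>2) has_real_derivative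
        DK (t *\<^sub>R z) \<bullet> z - lam * t * (norm z)\<^sup>2) (at t within {0..1})"
      by (rule derivative_eq_intros K_line1[OF hK] refl | simp)+
    show "\<And>t. t \<in> {0..1} \<Longrightarrow> ((\<lambda>t. DK (t *\<^sub>R z) \<bullet> z - lam * t * (norm z)\<^sup>2) has_real_derivative
        blinfun_apply (HK (t *\<^sub>R z)) z \<bullet> z - lam * (norm z)\<^sup>2) (at t within {0..1})"
      by (rule derivative_eq_intros K_line2[OF hK] refl | simp)+
    show "\<And>t. 0 < t \<Longrightarrow> t < 1 \<Longrightarrow> 0 \<le> blinfun_apply (HK (t *\<^sub>R z)) z \<bullet> z - lam * (norm z)\<^sup>2" using H(1) by simp
  qed (auto simp: H DK0[OF hK])
  then show "lam / 2 * (norm z)\<^sup>2 \<le> K z" by simp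
  have "0 \<le> (\<lambda>t. CK / 2 * t\<^sup>2 * (norm z)\<^sup>2 - K (t *\<^sub>R z)) 1"
  proof (rule nonneg_second[where a=1 and f="\<lambda>t. CK / 2 * t\<^sup>2 * (norm z)\<^sup>2 - K (t *\<^sub>R z)" and g = "\<lambda>t. CK * t * (norm z)\<^sup>2 - DK (t *\<^sub>R z) \<bullet> z"
        and k = "\<lambda>t. CK * (norm z)\<^sup>2 - blinfun_apply (HK (t *\<^sub>R z)) z \<bullet> z"])
    show "\<And>t. t \<in> {0..1} \<Longrightarrow> ((\<lambda>t. CK / 2 * t\<^sup>2 * (norm z)\<^sup>2 - K (t *\<^sub>R z)) has_real_derivative
        CK * t * (norm z)\<^sup>2 - DK (t *\<^sub>R z) \<bullet> z) (at t within {0..1})"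
      by (rule derivative_eq_intros K_line1[OF hK] refl | simp)+
    show "\<And>t. t \<in> {0..1} \<Longrightarrow> ((\<lambda>t. CK * t * (norm z)\<^sup>2 - DK (t *\<^sub>R z) \<bullet> z) has_real_derivative
        CK * (norm z)\<^sup>2 - blinfun_apply (HK (t *\<^sub>R z)) z \<bullet> z) (at t within {0..1})"
      by (rule derivative_eq_intros K_line2[OF hK] refl | simp)+
    show "\<And>t. 0 < t \<Longrightarrow> t < 1 \<Longrightarrow> 0 \<le> CK * (norm z)\<^sup>2 - blinfun_apply (HK (t *\<^sub>R z)) z \<bullet> z" using HU by simp
  qed (auto simp: H DK0[OF hK])
  then show "K z \<le> CK / 2 * (norm z)\<^sup>2" by simp
qed

lemma F_props:
  assumes hF: "hyp_F F F' F''"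
  shows "continuous_on {0..} F" "\<And>r. 0 \<le> r \<Longrightarrow> 0 \<le> F r"
    "\<And>x y. 0 \<le> x \<Longrightarrow> x < y \<Longrightarrow> F' x < F' y"
    "\<And>r. 0 \<le> r \<Longrightarrow> 0 \<le> F' r" "\<And>r. 0 < r \<Longrightarrow> 0 < F' r"
    "inj_on F' {0..}" "F 0 = 0" "F' 0 = 0"
proof -
  have d1: "\<And>r. r \<in> {0..} \<Longrightarrow> (F has_real_derivative F' r) (at r within {0..})"
   and d2: "\<And>r. r \<in> {0..} \<Longrightarrow> (F' has_real_derivative F'' r) (at r within {0..})"
   and pos: "\<And>r. 0 < r \<Longrightarrow> 0 < F'' r" and z: "F 0 = 0" "F' 0 = 0" and nn: "\<And>r. 0 \<le> r \<Longrightarrow> 0 \<le> F r"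
    using hF by (auto simp: hyp_F_def)
  show "continuous_on {0..} F" by (rule DERIV_continuous_on[OF d1])
  have c2: "continuous_on {0..} F'" by (rule DERIV_continuous_on[OF d2])
  show "\<And>r. 0 \<le> r \<Longrightarrow> 0 \<le> F r" by fact
  show "F 0 = 0" "F' 0 = 0" by fact+
  show inc: "F' x < F' y" if "0 \<le> x" "x < y" for x y
  proof (rule DERIV_pos_imp_increasing_open[of x y F'])
    show "x < y" by fact
    show "continuous_on {x..y} F'" using c2 that by (auto intro: continuous_on_subset)
    fix t assume t: "x < t" "t < y"
    have "(F' has_real_derivative F'' t) (at t within {0..})" using d2 t that by auto
    moreover have "at t within {0..} = at t" using t that by (intro at_within_interior) auto
    ultimately show "\<exists>y. (F' has_real_derivative y) (at t) \<and> 0 < y" using pos t that by auto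
  qed
  show "\<And>r. 0 < r \<Longrightarrow> 0 < F' r" using inc[of 0] z by auto
  then show "\<And>r. 0 \<le> r \<Longrightarrow> 0 \<le> F' r" using z by (metis le_less)
  show "inj_on F' {0..}"
    by (rule inj_onI) (metis atLeast_iff inc linorder_neqE_linordered_idom order_less_irrefl)
qed

lemma h_bound:
  assumes hF1: "hyp_F F1 F1' F1''" and hF2: "hyp_F F2 F2' F2''"
    and hh: "hyp_h h Dh Hh" and htheta: "hyp_theta F1' F1'' F2' F2'' Hh"
  obtains \<kappa> where "0 < \<kappa>" "\<And>r. r \<in> quadrant \<Longrightarrow> \<bar>h r\<bar> \<le> \<kappa> * F1 (fst r)"
proof -
  obtain \<theta> :: "real \<times> real \<Rightarrow> real" and \<kappa> where kp: "0 < \<kappa>"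
    and th1: "\<forall>u\<in>quadrant. 0 < coord 1 u \<longrightarrow>
           \<theta> u = d2h Hh 1 1 (rinv F1' F2' u) /
                 (if (1::nat) = 1 then F1'' else F2'') (coord 1 (rinv F1' F2' u))"
    and th2: "\<forall>u\<in>quadrant. \<bar>\<theta> u\<bar> \<le> \<kappa> * min (min 1 (fst u)) (min (snd u)
            (sqrt (coord 1 (rinv F1' F2' u) / coord 1 (rinv F1' F2' u))))"
    using htheta unfolding hyp_theta_def by blast
  note P1 = F_props[OF hF1] and P2 = F_props[OF hF2]
  have hd: "\<And>r. r \<in> quadrant \<Longrightarrow> (h has_derivative (\<lambda>v. Dh r \<bullet> v)) (at r within quadrant)"
    and Dd: "\<And>r. r \<in> quadrant \<Longrightarrow> (Dh has_derivative blinfun_apply (Hh r)) (at r within quadrant)"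
    and ax: "\<And>r. r \<in> quadrant \<Longrightarrow> (fst r = 0 \<or> snd r = 0) \<Longrightarrow> h r = 0 \<and> Dh r = 0"
    using hh unfolding hyp_h_def by auto
  have F1d1: "\<And>r. r \<in> {0..} \<Longrightarrow> (F1 has_real_derivative F1' r) (at r within {0..})"
   and F1d2: "\<And>r. r \<in> {0..} \<Longrightarrow> (F1' has_real_derivative F1'' r) (at r within {0..})"
    using hF1 by (auto simp: hyp_F_def)
  have Hb: "\<bar>d2h Hh 1 1 (s, r2)\<bar> \<le> \<kappa> * F1'' s" if "0 < s" "0 \<le> r2" for s r2
  proof -
    define u where "u = (F1' s, F2' r2)"
    have uq: "u \<in> quadrant" using P1(4) P2(4) that by (auto simp: u_def quadrant_def)
    have ri: "rinv F1' F2' u = (s, r2)"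
      using that by (auto simp: u_def rinv_def the_inv_into_f_f P1(6) P2(6))
    have c: "0 < coord 1 u" using P1(5) that by (simp add: u_def coord_def)
    have pos: "0 < F1'' s" using hF1 that by (auto simp: hyp_F_def)
    have "\<theta> u = d2h Hh 1 1 (s, r2) / F1'' s" using th1 uq c ri by (simp add: coord_def)
    moreover have "\<bar>\<theta> u\<bar> \<le> \<kappa>"
    proof -
      let ?m = "min (min 1 (fst u)) (min (snd u) (sqrt (coord 1 (rinv F1' F2' u) / coord 1 (rinv F1' F2' u))))"
      have "\<bar>\<theta> u\<bar> \<le> \<kappa> * ?m" using th2 uq by blast
      also have "\<kappa> * ?m \<le> \<kappa> * 1" using kp by (intro mult_left_mono) auto
      finally show ?thesis by simp
    qed
    ultimately show ?thesis using pos by (simp add: abs_div pos_divide_le_eq)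
  qed
  have "\<bar>h (a, r2)\<bar> \<le> \<kappa> * F1 a" if "0 \<le> a" "0 \<le> r2" for a r2
  proof -
    have line: "((\<lambda>s. (s, r2)) has_derivative (\<lambda>x. (x, 0))) (at s within {0..a})" for s
      by (auto intro!: derivative_eq_intros)
    have img: "(\<lambda>s. (s, r2)) ` {0..a} \<subseteq> quadrant" using that by (auto simp: quadrant_def)
    have hl: "((\<lambda>s. h (s, r2)) has_real_derivative fst (Dh (s, r2))) (at s within {0..a})"
      if "s \<in> {0..a}" for s
    proof -
      have "((\<lambda>s. h (s, r2)) has_derivative (\<lambda>x. Dh (s, r2) \<bullet> (x, 0))) (at s within {0..a})"
        by (rule has_derivative_in_compose2[OF hd img that line])
      moreover have "(\<lambda>x. Dh (s, r2) \<bullet> (x, 0)) = (*) (fst (Dh (s, r2)))"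
        by (auto simp: fun_eq_iff inner_Pair_0)
      ultimately show ?thesis by (simp add: has_field_derivative_def)
    qed
    have Dl: "((\<lambda>s. fst (Dh (s, r2))) has_real_derivative d2h Hh 1 1 (s, r2)) (at s within {0..a})"
      if "s \<in> {0..a}" for s
    proof -
      have "((\<lambda>s. Dh (s, r2)) has_derivative (\<lambda>x. blinfun_apply (Hh (s, r2)) (x, 0))) (at s within {0..a})"
        by (rule has_derivative_in_compose2[OF Dd img that line])
      then have "((\<lambda>s. fst (Dh (s, r2))) has_derivative (\<lambda>x. fst (blinfun_apply (Hh (s, r2)) (x, 0)))) (at s within {0..a})"
        by (rule has_derivative_fst)
      moreover have "(\<lambda>x. fst (blinfun_apply (Hh (s, r2)) (x, 0))) = (*) (d2h Hh 1 1 (s, r2))"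
      proof
        fix x :: real
        have "(x, 0::real) = x *\<^sub>R (1, 0)" by simp
        then have "blinfun_apply (Hh (s, r2)) (x, 0) = x *\<^sub>R blinfun_apply (Hh (s, r2)) (1, 0)"
          by (metis blinfun.scaleR_right)
        then show "fst (blinfun_apply (Hh (s, r2)) (x, 0)) = d2h Hh 1 1 (s, r2) * x"
          by (simp add: d2h_def unitv_def inner_Pair_0 mult.commute)
      qed
      ultimately show ?thesis by (simp add: has_field_derivative_def)
    qed
    have F1l: "(F1 has_real_derivative F1' s) (at s within {0..a})" if "s \<in> {0..a}" for s
      using F1d1[of s] that by (auto intro: has_field_derivative_subset)
    have F1l2: "(F1' has_real_derivative F1'' s) (at s within {0..a})" if "s \<in> {0..a}" for s
      using F1d2[of s] that by (auto intro: has_field_derivative_subset)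
    have z: "h (0, r2) = 0" "Dh (0, r2) = 0" using ax[of "(0, r2)"] that by (auto simp: quadrant_def)
    have "0 \<le> \<kappa> * F1 a - h (a, r2)"
    proof (rule nonneg_second[where a=a and f="\<lambda>s. \<kappa> * F1 s - h (s, r2)"
          and g="\<lambda>s. \<kappa> * F1' s - fst (Dh (s, r2))" and k="\<lambda>s. \<kappa> * F1'' s - d2h Hh 1 1 (s, r2)"])
      show "\<And>t. t \<in> {0..a} \<Longrightarrow> ((\<lambda>s. \<kappa> * F1 s - h (s, r2)) has_real_derivative \<kappa> * F1' t - fst (Dh (t, r2))) (at t within {0..a})"
        by (intro derivative_eq_intros F1l hl) (auto intro: F1l hl)
      show "\<And>t. t \<in> {0..a} \<Longrightarrow> ((\<lambda>s. \<kappa> * F1' s - fst (Dh (s, r2))) has_real_derivative \<kappa> * F1'' t - d2h Hh 1 1 (t, r2)) (at t within {0..a})"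
        by (intro derivative_eq_intros F1l2 Dl) (auto intro: F1l2 Dl[unfolded One_nat_def])
      show "\<And>t. 0 < t \<Longrightarrow> t < a \<Longrightarrow> 0 \<le> \<kappa> * F1'' t - d2h Hh 1 1 (t, r2)"
        using Hb that by fastforce
    qed (use z P1 that in auto)
    moreover have "0 \<le> \<kappa> * F1 a + h (a, r2)"
    proof (rule nonneg_second[where a=a and f="\<lambda>s. \<kappa> * F1 s + h (s, r2)"
          and g="\<lambda>s. \<kappa> * F1' s + fst (Dh (s, r2))" and k="\<lambda>s. \<kappa> * F1'' s + d2h Hh 1 1 (s, r2)"])
      show "\<And>t. t \<in> {0..a} \<Longrightarrow> ((\<lambda>s. \<kappa> * F1 s + h (s, r2)) has_real_derivative \<kappa> * F1' t + fst (Dh (t, r2))) (at t within {0..a})"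
        by (intro derivative_eq_intros F1l hl) (auto intro: F1l hl)
      show "\<And>t. t \<in> {0..a} \<Longrightarrow> ((\<lambda>s. \<kappa> * F1' s + fst (Dh (s, r2))) has_real_derivative \<kappa> * F1'' t + d2h Hh 1 1 (t, r2)) (at t within {0..a})"
        by (intro derivative_eq_intros F1l2 Dl) (auto intro: F1l2 Dl[unfolded One_nat_def])
      show "\<And>t. 0 < t \<Longrightarrow> t < a \<Longrightarrow> 0 \<le> \<kappa> * F1'' t + d2h Hh 1 1 (t, r2)"
        using Hb that by fastforce
    qed (use z P1 that in auto)
    ultimately show ?thesis by linarith
  qed
  then show ?thesis using that kp by (force simp: quadrant_def)
qed

lemma G_nonneg:
  assumes hF1: "hyp_F F1 F1' F1''" and hF2: "hyp_F F2 F2' F2''"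
    and hh: "hyp_h h Dh Hh"
    and cv: "convex_on quadrant (\<lambda>r. F1 (fst r) + F2 (snd r) + 2 * e0 * h r)"
    and r: "r \<in> quadrant"
  shows "0 \<le> F1 (fst r) + F2 (snd r) + 2 * e0 * h r"
proof (rule ccontr)
  define G where "G = (\<lambda>r. F1 (fst r) + F2 (snd r) + 2 * e0 * h r)"
  assume "\<not> ?thesis"
  then have neg: "G r < 0" by (simp add: G_def)
  note P1 = F_props[OF hF1] and P2 = F_props[OF hF2]
  have hd: "\<And>r. r \<in> quadrant \<Longrightarrow> (h has_derivative (\<lambda>v. Dh r \<bullet> v)) (at r within quadrant)"
    and ax: "\<And>r. r \<in> quadrant \<Longrightarrow> (fst r = 0 \<or> snd r = 0) \<Longrightarrow> h r = 0 \<and> Dh r = 0"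
    using hh unfolding hyp_h_def by auto
  have F1d1: "\<And>r. r \<in> {0..} \<Longrightarrow> (F1 has_derivative (*) (F1' r)) (at r within {0..})"
    using hF1 by (auto simp: hyp_F_def has_field_derivative_def)
  have F2d1: "\<And>r. r \<in> {0..} \<Longrightarrow> (F2 has_derivative (*) (F2' r)) (at r within {0..})"
    using hF2 by (auto simp: hyp_F_def has_field_derivative_def)
  have q0: "(0::real\<times>real) \<in> quadrant" by (simp add: quadrant_def zero_prod_def)
  have fq: "fst ` quadrant \<subseteq> {0..}" "snd ` quadrant \<subseteq> {0..}" by (auto simp: quadrant_def)
  have Gd: "(G has_derivative (\<lambda>v. F1' (fst p) * fst v + F2' (snd p) * snd v + 2 * e0 * (Dh p \<bullet> v)))
      (at p within quadrant)" if p: "p \<in> quadrant" for p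
  proof -
    have a: "((\<lambda>p. F1 (fst p)) has_derivative (\<lambda>v. F1' (fst p) * fst v)) (at p within quadrant)"
      by (rule has_derivative_in_compose2[OF F1d1 fq(1) p has_derivative_fst[OF has_derivative_ident]])
    have b: "((\<lambda>p. F2 (snd p)) has_derivative (\<lambda>v. F2' (snd p) * snd v)) (at p within quadrant)"
      by (rule has_derivative_in_compose2[OF F2d1 fq(2) p has_derivative_snd[OF has_derivative_ident]])
    show ?thesis unfolding G_def
      by (intro has_derivative_add a b has_derivative_mult_right hd p)
  qed
  have G0: "G 0 = 0" using ax[OF q0] P1 P2 by (simp add: G_def)
  have D0: "Dh 0 = 0" using ax[OF q0] by simp
  have img: "(\<lambda>t. t *\<^sub>R r) ` {0..1} \<subseteq> quadrant" using r by (auto simp: quadrant_def)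
  have "((\<lambda>t. G (t *\<^sub>R r)) has_derivative (\<lambda>x. F1' (fst 0) * fst (x *\<^sub>R r) + F2' (snd 0) * snd (x *\<^sub>R r) + 2 * e0 * (Dh 0 \<bullet> (x *\<^sub>R r))))
      (at 0 within {0..1})"
  proof -
    have l: "((\<lambda>t. t *\<^sub>R r) has_derivative (\<lambda>x. x *\<^sub>R r)) (at 0 within {0..1})"
      by (auto intro!: derivative_eq_intros)
    show ?thesis using has_derivative_in_compose2[OF Gd img _ l] by simp
  qed
  then have "((\<lambda>t. G (t *\<^sub>R r)) has_derivative (\<lambda>x. 0)) (at 0 within {0..1})"
    using P1 P2 D0 by simp
  then have lim: "((\<lambda>t. (1 / norm t) *\<^sub>R G (t *\<^sub>R r)) \<longlongrightarrow> 0) (at_right 0)"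
    unfolding has_derivative_within using G0 by (simp add: at_within_Icc_at_right)
  have "eventually (\<lambda>t. G r < (1 / norm t) *\<^sub>R G (t *\<^sub>R r)) (at_right 0)"
    using order_tendstoD(1)[OF lim, of "G r"] neg by simp
  moreover have "eventually (\<lambda>t. 0 < t \<and> t < (1::real)) (at_right 0)"
    by (intro eventually_conj eventually_at_right_less) (auto simp: eventually_at_right_less eventually_at_right[of 0 1] intro: exI[of _ 1])
  ultimately obtain t where t: "G r < (1 / norm t) *\<^sub>R G (t *\<^sub>R r)" "0 < t" "t < 1"
    using eventually_happens'[OF trivial_limit_at_right_real, of "\<lambda>t. _"]
    by (metis (mono_tags, lifting) eventually_conj_iff eventually_happens' trivial_limit_at_right_real)
  have "G ((1 - t) *\<^sub>R 0 + t *\<^sub>R r) \<le> (1 - t) * G 0 + t * G r"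
    using cv t q0 r unfolding G_def by (intro convex_onD) auto
  then have "G (t *\<^sub>R r) \<le> t * G r" using G0 by simp
  then have "(1 / norm t) *\<^sub>R G (t *\<^sub>R r) \<le> G r" using t by (simp add: divide_simps mult.commute)
  then show False using t neg by linarith
qed

lemma Fh_lower:
  assumes hF1: "hyp_F F1 F1' F1''" and hF2: "hyp_F F2 F2' F2''"
    and hh: "hyp_h h Dh Hh"
    and e0: "0 < e0" and cv: "convex_on quadrant (\<lambda>r. F1 (fst r) + F2 (snd r) + 2 * e0 * h r)"
    and e: "0 < e" "e \<le> e0"
    and r: "r \<in> quadrant"
  shows "(F1 (fst r) + F2 (snd r)) / 2 \<le> F1 (fst r) + F2 (snd r) + e * h r"
proof -
  have G: "0 \<le> F1 (fst r) + F2 (snd r) + 2 * e0 * h r" by (rule G_nonneg[OF hF1 hF2 hh cv r])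
  have F: "0 \<le> F1 (fst r) + F2 (snd r)" using F_props(2)[OF hF1] F_props(2)[OF hF2] r
    by (force simp: quadrant_def)
  define c where "c = e / (2 * e0)"
  have c: "0 < c" "c \<le> 1/2" using e e0 by (auto simp: c_def divide_simps)
  have eq: "F1 (fst r) + F2 (snd r) + e * h r
      = (1 - c) * (F1 (fst r) + F2 (snd r)) + c * (F1 (fst r) + F2 (snd r) + 2 * e0 * h r)"
    using e0 by (simp add: c_def field_simps)
  have "(1/2) * (F1 (fst r) + F2 (snd r)) \<le> (1 - c) * (F1 (fst r) + F2 (snd r))"
    using c F by (intro mult_right_mono) auto
  moreover have "0 \<le> c * (F1 (fst r) + F2 (snd r) + 2 * e0 * h r)" using c G by simp
  ultimately show ?thesis unfolding eq by linarith
qed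

lemma P2_meas:
  assumes "P2 \<mu>" "f \<in> borel_measurable borel"
  shows "f \<in> borel_measurable \<mu>"
  using assms measurable_cong_sets[of \<mu> borel borel borel] by (auto simp: P2_def)

lemma P2_basic:
  fixes \<mu> :: "'a::euclidean_space measure"
  assumes "P2 \<mu>"
  shows "prob_space \<mu>" "integrable \<mu> (\<lambda>x. (norm x)\<^sup>2)" "integrable \<mu> (\<lambda>x. norm x)"
    "integrable \<mu> (\<lambda>x. x)" "\<And>c::real. integrable \<mu> (\<lambda>x. c)"
proof -
  show ps: "prob_space \<mu>" and sq: "integrable \<mu> (\<lambda>x. (norm x)\<^sup>2)" using assms by (auto simp: P2_def)
  show c: "\<And>c::real. integrable \<mu> (\<lambda>x. c)"
    using ps by (simp add: prob_space.finite_measure finite_measure.integrable_const)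
  show n: "integrable \<mu> (\<lambda>x. norm x)"
  proof (rule Bochner_Integration.integrable_bound[of _ "\<lambda>x. 1 + (norm x)\<^sup>2"])
    show "integrable \<mu> (\<lambda>x. 1 + (norm x)\<^sup>2)" using Bochner_Integration.integrable_add[OF c[of 1] sq] by simp
    show "(\<lambda>x. norm x) \<in> borel_measurable \<mu>" by (rule P2_meas[OF assms]) simp
    have "norm x \<le> 1 + (norm x)\<^sup>2" for x :: 'a
    proof (cases "norm x \<le> 1")
      case True then show ?thesis by (smt (verit) zero_le_power2)
    next
      case False
      then have "norm x * 1 \<le> norm x * norm x" by (intro mult_left_mono) auto
      then show ?thesis by (simp add: power2_eq_square)
    qed
    then show "AE x in \<mu>. norm (norm x) \<le> norm (1 + (norm x)\<^sup>2)" by simp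
  qed
  show "integrable \<mu> (\<lambda>x. x)"
    by (rule Bochner_Integration.integrable_bound[OF n]) (auto intro: P2_meas[OF assms])
qed

lemma K_nonneg:
  assumes hK: "hyp_K K DK HK lam CK"
  shows "0 \<le> K x"
  using hK unfolding hyp_K_def by blast

lemma K_cont:
  assumes hK: "hyp_K K DK HK lam CK"
  shows "continuous_on UNIV K" "K \<in> borel_measurable borel" "0 \<le> CK"
proof -
  have "\<forall>x. (K has_derivative (\<lambda>v. DK x \<bullet> v)) (at x)" using hK unfolding hyp_K_def by blast
  then show c: "continuous_on UNIV K"
    by (meson continuous_at_imp_continuous_on has_derivative_continuous)
  then show "K \<in> borel_measurable borel" by (rule borel_measurable_continuous_onI)
  have "norm (HK 0) \<le> CK" using hK unfolding hyp_K_def by blast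
  then show "0 \<le> CK" by (rule order_trans[OF norm_ge_zero])
qed

lemma norm_diff_sq_le:
  fixes x y :: "'a::real_normed_vector"
  shows "(norm (x - y))\<^sup>2 \<le> 2 * (norm x)\<^sup>2 + 2 * (norm y)\<^sup>2"
proof -
  have "norm (x - y) \<le> norm x + norm y" by (rule norm_triangle_ineq4)
  then have "(norm (x - y))\<^sup>2 \<le> (norm x + norm y)\<^sup>2" by (intro power_mono) auto
  also have "\<dots> \<le> 2 * (norm x)\<^sup>2 + 2 * (norm y)\<^sup>2"
  proof -
    have "0 \<le> (norm x - norm y)\<^sup>2" by simp
    then show ?thesis by (simp add: power2_eq_square algebra_simps)
  qed
  finally show ?thesis .
qed

lemma K_upper2:
  assumes hK: "hyp_K K DK HK lam CK"
  shows "K (x - y) \<le> CK * (norm x)\<^sup>2 + CK * (norm y)\<^sup>2"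
proof -
  have "K (x - y) \<le> CK / 2 * (norm (x - y))\<^sup>2" by (rule K_bounds(2)[OF hK])
  also have "\<dots> \<le> CK / 2 * (2 * (norm x)\<^sup>2 + 2 * (norm y)\<^sup>2)"
    using K_cont(3)[OF hK] by (intro mult_left_mono norm_diff_sq_le) auto
  finally show ?thesis by (simp add: algebra_simps)
qed

lemma K_int:
  assumes hK: "hyp_K K DK HK lam CK" and P: "P2 \<nu>"
  shows "integrable \<nu> (\<lambda>y. K (x - y))"
proof (rule Bochner_Integration.integrable_bound[of _ "\<lambda>y. CK * (norm x)\<^sup>2 + CK * (norm y)\<^sup>2"])
  show "integrable \<nu> (\<lambda>y. CK * (norm x)\<^sup>2 + CK * (norm y)\<^sup>2)"
    using Bochner_Integration.integrable_add[OF P2_basic(5)[OF P, of "CK * (norm x)\<^sup>2"]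
        integrable_mult_right[OF P2_basic(2)[OF P], of CK]] by simp
  have [measurable]: "K \<in> borel_measurable borel" by (rule K_cont(2)[OF hK])
  show "(\<lambda>y. K (x - y)) \<in> borel_measurable \<nu>" by (rule P2_meas[OF P]) measurable
  have "norm (K (x - y)) \<le> norm (CK * (norm x)\<^sup>2 + CK * (norm y)\<^sup>2)" for y
  proof -
    have "0 \<le> K (x - y)" by (rule K_nonneg[OF hK])
    moreover have "K (x - y) \<le> CK * (norm x)\<^sup>2 + CK * (norm y)\<^sup>2" by (rule K_upper2[OF hK])
    ultimately show ?thesis unfolding real_norm_def by linarith
  qed
  then show "AE y in \<nu>. norm (K (x - y)) \<le> norm (CK * (norm x)\<^sup>2 + CK * (norm y)\<^sup>2)"
    by (intro always_eventually allI)
qed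

lemma K_nn:
  assumes hK: "hyp_K K DK HK lam CK" and P: "P2 \<nu>"
  shows "(\<integral>\<^sup>+ y. ennreal (K (x - y)) \<partial>\<nu>) = ennreal (\<integral> y. K (x - y) \<partial>\<nu>)"
proof (rule nn_integral_eq_integral[OF K_int[OF hK P]])
  show "AE y in \<nu>. 0 \<le> K (x - y)" using K_nonneg[OF hK] by simp
qed

lemma quad_int:
  fixes \<mu> :: "'a::euclidean_space measure"
  assumes P: "P2 \<mu>"
  shows "integrable \<mu> (\<lambda>x. (norm x)\<^sup>2 - 2 * (x \<bullet> c) + a)"
    "(\<integral>x. (norm x)\<^sup>2 - 2 * (x \<bullet> c) + a \<partial>\<mu>) = mom2 \<mu> - 2 * (mom1 \<mu> \<bullet> c) + a"
proof -
  note B = P2_basic[OF P]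
  have i1: "integrable \<mu> (\<lambda>x. 2 * (x \<bullet> c))"
    by (intro integrable_mult_right integrable_inner_left B(4))
  show "integrable \<mu> (\<lambda>x. (norm x)\<^sup>2 - 2 * (x \<bullet> c) + a)"
    by (intro Bochner_Integration.integrable_add Bochner_Integration.integrable_diff B(2) i1 B(5))
  have "(\<integral>x. (norm x)\<^sup>2 - 2 * (x \<bullet> c) + a \<partial>\<mu>) = (\<integral>x. (norm x)\<^sup>2 - 2 * (x \<bullet> c) \<partial>\<mu>) + (\<integral>x. a \<partial>\<mu>)"
    by (intro Bochner_Integration.integral_add Bochner_Integration.integrable_diff B(2) i1 B(5))
  also have "(\<integral>x. (norm x)\<^sup>2 - 2 * (x \<bullet> c) \<partial>\<mu>) = mom2 \<mu> - (\<integral>x. 2 * (x \<bullet> c) \<partial>\<mu>)"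
    unfolding mom2_def by (intro Bochner_Integration.integral_diff B(2) i1)
  also have "(\<integral>x. 2 * (x \<bullet> c) \<partial>\<mu>) = 2 * (mom1 \<mu> \<bullet> c)"
    unfolding mom1_def using B(4) by simp
  also have "(\<integral>x. a \<partial>\<mu>) = a"
    using B(1) by (simp add: prob_space.prob_space)
  finally show "(\<integral>x. (norm x)\<^sup>2 - 2 * (x \<bullet> c) + a \<partial>\<mu>) = mom2 \<mu> - 2 * (mom1 \<mu> \<bullet> c) + a" .
qed

lemma norm_diff_sq_expand:
  fixes x y :: "'a::real_inner"
  shows "(norm (x - y))\<^sup>2 = (norm y)\<^sup>2 - 2 * (y \<bullet> x) + (norm x)\<^sup>2"
  by (simp add: power2_norm_eq_inner inner_diff_left inner_diff_right inner_commute)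

lemma mom2_nonneg: "0 \<le> mom2 \<mu>"
  unfolding mom2_def by (rule integral_nonneg_AE) simp

lemma inter_upper:
  fixes \<mu> \<nu> :: "'a::euclidean_space measure"
  assumes hK: "hyp_K K DK HK lam CK" and P: "P2 \<mu>" "P2 \<nu>"
  shows "inter K \<mu> \<nu> \<le> ennreal (CK * (mom2 \<mu> + mom2 \<nu>))"
proof -
  have CK: "0 \<le> CK" by (rule K_cont(3)[OF hK])
  note B1 = P2_basic[OF P(1)] and B2 = P2_basic[OF P(2)]
  have inner: "(\<integral>\<^sup>+ y. ennreal (K (x - y)) \<partial>\<nu>) \<le> ennreal (CK * (norm x)\<^sup>2 + CK * mom2 \<nu>)" for x
  proof -
    have "(\<integral>\<^sup>+ y. ennreal (K (x - y)) \<partial>\<nu>) \<le> (\<integral>\<^sup>+ y. ennreal (CK * (norm x)\<^sup>2 + CK * (norm y)\<^sup>2) \<partial>\<nu>)"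
      by (intro nn_integral_mono ennreal_leI K_upper2[OF hK])
    also have "\<dots> = ennreal (\<integral> y. CK * (norm x)\<^sup>2 + CK * (norm y)\<^sup>2 \<partial>\<nu>)"
      using CK by (intro nn_integral_eq_integral Bochner_Integration.integrable_add B2(5)
          integrable_mult_right B2(2)) auto
    also have "(\<integral> y. CK * (norm x)\<^sup>2 + CK * (norm y)\<^sup>2 \<partial>\<nu>) = CK * (norm x)\<^sup>2 + CK * mom2 \<nu>"
      using B2 unfolding mom2_def by (simp add: prob_space.prob_space)
    finally show ?thesis .
  qed
  have "inter K \<mu> \<nu> \<le> (\<integral>\<^sup>+ x. ennreal (CK * (norm x)\<^sup>2 + CK * mom2 \<nu>) \<partial>\<mu>)"
    unfolding inter_def by (intro nn_integral_mono inner)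
  also have "\<dots> = ennreal (\<integral> x. CK * (norm x)\<^sup>2 + CK * mom2 \<nu> \<partial>\<mu>)"
    using CK mom2_nonneg[of \<nu>] by (intro nn_integral_eq_integral Bochner_Integration.integrable_add B1(5)
          integrable_mult_right B1(2)) auto
  also have "(\<integral> x. CK * (norm x)\<^sup>2 + CK * mom2 \<nu> \<partial>\<mu>) = CK * (mom2 \<mu> + mom2 \<nu>)"
    using B1 unfolding mom2_def by (simp add: prob_space.prob_space algebra_simps)
  finally show ?thesis .
qed

lemma sq_dist_int:
  fixes \<nu> :: "'a::euclidean_space measure"
  assumes P: "P2 \<nu>"
  shows "(\<integral>y. (norm (x - y))\<^sup>2 \<partial>\<nu>) = (norm x)\<^sup>2 - 2 * (x \<bullet> mom1 \<nu>) + mom2 \<nu>"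
    "integrable \<nu> (\<lambda>y. (norm (x - y))\<^sup>2)"
  unfolding norm_diff_sq_expand using quad_int[OF P, of x "(norm x)\<^sup>2"]
  by (simp_all add: inner_commute algebra_simps)

lemma sq_dist_nonneg:
  fixes \<nu> :: "'a::euclidean_space measure"
  assumes P: "P2 \<nu>"
  shows "0 \<le> (norm x)\<^sup>2 - 2 * (x \<bullet> mom1 \<nu>) + mom2 \<nu>"
  unfolding sq_dist_int(1)[OF P, symmetric] by (rule integral_nonneg_AE) simp

lemma inter_lower:
  fixes \<mu> \<nu> :: "'a::euclidean_space measure"
  assumes hK: "hyp_K K DK HK lam CK" and P: "P2 \<mu>" "P2 \<nu>" and m: "mom1 \<mu> + mom1 \<nu> = 0"
  shows "ennreal (lam / 2 * (mom2 \<mu> + mom2 \<nu>)) \<le> inter K \<mu> \<nu>"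
proof -
  have lam: "0 < lam" using hK unfolding hyp_K_def by blast
  have inner: "ennreal (lam / 2 * ((norm x)\<^sup>2 - 2 * (x \<bullet> mom1 \<nu>) + mom2 \<nu>)) \<le> (\<integral>\<^sup>+ y. ennreal (K (x - y)) \<partial>\<nu>)" for x
  proof -
    have "ennreal (lam / 2 * ((norm x)\<^sup>2 - 2 * (x \<bullet> mom1 \<nu>) + mom2 \<nu>))
        = ennreal (\<integral> y. lam / 2 * (norm (x - y))\<^sup>2 \<partial>\<nu>)"
      by (simp add: sq_dist_int(1)[OF P(2)])
    also have "\<dots> = (\<integral>\<^sup>+ y. ennreal (lam / 2 * (norm (x - y))\<^sup>2) \<partial>\<nu>)"
      using lam by (intro nn_integral_eq_integral[symmetric] integrable_mult_right sq_dist_int(2)[OF P(2)]) auto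
    also have "\<dots> \<le> (\<integral>\<^sup>+ y. ennreal (K (x - y)) \<partial>\<nu>)"
      by (intro nn_integral_mono ennreal_leI K_bounds(1)[OF hK])
    finally show ?thesis .
  qed
  have "(\<integral>\<^sup>+ x. ennreal (lam / 2 * ((norm x)\<^sup>2 - 2 * (x \<bullet> mom1 \<nu>) + mom2 \<nu>)) \<partial>\<mu>) \<le> inter K \<mu> \<nu>"
    unfolding inter_def by (intro nn_integral_mono inner)
  moreover have "(\<integral>\<^sup>+ x. ennreal (lam / 2 * ((norm x)\<^sup>2 - 2 * (x \<bullet> mom1 \<nu>) + mom2 \<nu>)) \<partial>\<mu>)
      = ennreal (\<integral> x. lam / 2 * ((norm x)\<^sup>2 - 2 * (x \<bullet> mom1 \<nu>) + mom2 \<nu>) \<partial>\<mu>)"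
    using lam sq_dist_nonneg[OF P(2)]
    by (intro nn_integral_eq_integral integrable_mult_right quad_int(1)[OF P(1)]) auto
  moreover have "(\<integral> x. lam / 2 * ((norm x)\<^sup>2 - 2 * (x \<bullet> mom1 \<nu>) + mom2 \<nu>) \<partial>\<mu>)
      = lam / 2 * (mom2 \<mu> - 2 * (mom1 \<mu> \<bullet> mom1 \<nu>) + mom2 \<nu>)"
    by (simp add: quad_int(2)[OF P(1)])
  moreover have "mom2 \<mu> + mom2 \<nu> \<le> mom2 \<mu> - 2 * (mom1 \<mu> \<bullet> mom1 \<nu>) + mom2 \<nu>"
  proof -
    have "mom1 \<nu> = - mom1 \<mu>" using m by (simp add: eq_neg_iff_add_eq_0 add.commute)
    then have "mom1 \<mu> \<bullet> mom1 \<nu> = - (mom1 \<mu> \<bullet> mom1 \<mu>)" by simp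
    then show ?thesis by simp
  qed
  ultimately show ?thesis
    using lam by (smt (verit) ennreal_leI mult_left_mono divide_pos_pos order_trans)
qed

lemma meas_comp_nonneg:
  fixes F :: "real \<Rightarrow> real" and f :: "'a \<Rightarrow> real"
  assumes c: "continuous_on {0..} F" and f: "f \<in> borel_measurable M" and nn: "\<And>x. 0 \<le> f x"
  shows "(\<lambda>x. F (f x)) \<in> borel_measurable M"
proof -
  have m: "continuous_on UNIV (\<lambda>r::real. max 0 r)"
    using continuous_on_max[of UNIV "\<lambda>r::real. 0" "\<lambda>r. r"] by (simp add: continuous_on_const continuous_on_id)
  have "continuous_on UNIV (\<lambda>r. F (max 0 r))"
    by (rule continuous_on_compose2[OF c m]) auto
  then have "(\<lambda>x. F (max 0 (f x))) \<in> borel_measurable M"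
    by (rule borel_measurable_continuous_on[OF _ f])
  then show ?thesis using nn by (simp add: max_absorb2)
qed

lemma h_cont:
  assumes hh: "hyp_h h Dh Hh"
  shows "continuous_on quadrant h"
proof -
  have "\<forall>r\<in>quadrant. (h has_derivative (\<lambda>v. Dh r \<bullet> v)) (at r within quadrant)"
    using hh unfolding hyp_h_def by blast
  then show ?thesis
    unfolding continuous_on_eq_continuous_within using has_derivative_continuous by blast
qed

lemma meas_h:
  assumes hh: "hyp_h h Dh Hh" and f: "f1 \<in> borel_measurable M" "f2 \<in> borel_measurable M"
    and nn: "\<And>x. 0 \<le> f1 x" "\<And>x. 0 \<le> f2 x"
  shows "(\<lambda>x. h (f1 x, f2 x)) \<in> borel_measurable M"
proof -
  have "continuous_on UNIV (\<lambda>p. h (max 0 (fst p), max 0 (snd p)))"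
    by (rule continuous_on_compose2[OF h_cont[OF hh]]) (auto intro!: continuous_intros simp: quadrant_def)
  then have "(\<lambda>x. h (max 0 (f1 x), max 0 (f2 x))) \<in> borel_measurable M"
    by (rule borel_measurable_continuous_Pair[OF f, of "\<lambda>a b. h (max 0 a, max 0 b)"])
  then show ?thesis using nn by (simp add: max_absorb2)
qed

lemma dens_props:
  assumes "is_dens \<mu> f"
  shows "f \<in> borel_measurable lborel" "\<And>x. 0 \<le> f x" "\<mu> = density lborel (\<lambda>x. ennreal (f x))"
  using assms by (auto simp: is_dens_def)

lemma dens_unique:
  assumes "is_dens \<mu> f" "is_dens \<mu> g"
  shows "AE x in lborel. f x = g x"
proof -
  note f = dens_props[OF assms(1)] and g = dens_props[OF assms(2)]
  have "AE x in lborel. ennreal (f x) = ennreal (g x)"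
    using f g by (intro sigma_finite_measure.density_unique[OF sigma_finite_lborel]) auto
  then show ?thesis by (rule eventually_mono) (use f(2) g(2) in auto)
qed

lemma conv_eq:
  assumes hK: "hyp_K K DK HK lam CK" and d: "is_dens \<nu> f"
  shows "conv K f x = (\<integral>y. K (x - y) \<partial>\<nu>)"
proof -
  note fd = dens_props[OF d]
  have [measurable]: "K \<in> borel_measurable borel" by (rule K_cont(2)[OF hK])
  have "(\<integral>y. K (x - y) \<partial>\<nu>) = (\<integral>y. f y *\<^sub>R K (x - y) \<partial>lborel)"
    unfolding fd(3) by (rule integral_density) (use fd in auto)
  then show ?thesis by (simp add: conv_def mult.commute)
qed

lemma conv_nonneg:
  assumes hK: "hyp_K K DK HK lam CK" and d: "is_dens \<nu> f"
  shows "0 \<le> conv K f x"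
  unfolding conv_eq[OF hK d] by (rule integral_nonneg_AE) (simp add: K_nonneg[OF hK])

lemma conv_meas:
  assumes hK: "hyp_K K DK HK lam CK" and d: "is_dens \<nu> f"
  shows "conv K f \<in> borel_measurable lborel"
proof -
  note fd = dens_props[OF d]
  have [measurable]: "K \<in> borel_measurable borel" by (rule K_cont(2)[OF hK])
  have [measurable]: "f \<in> borel_measurable lborel" by (rule fd(1))
  have "(\<lambda>x. \<integral>y. K (x - y) * f y \<partial>lborel) \<in> borel_measurable lborel"
    by (rule lborel.borel_measurable_lebesgue_integral) measurable
  then show ?thesis unfolding conv_def[abs_def] .
qed

lemma inter_dens:
  assumes hK: "hyp_K K DK HK lam CK" and d1: "is_dens \<mu> f1" and d2: "is_dens \<nu> f2" and P: "P2 \<nu>"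
  shows "inter K \<mu> \<nu> = (\<integral>\<^sup>+ x. ennreal (f1 x * conv K f2 x) \<partial>lborel)"
proof -
  note fd = dens_props[OF d1]
  have "inter K \<mu> \<nu> = (\<integral>\<^sup>+ x. ennreal (conv K f2 x) \<partial>\<mu>)"
    unfolding inter_def by (simp add: K_nn[OF hK P] conv_eq[OF hK d2])
  also have "\<dots> = (\<integral>\<^sup>+ x. ennreal (f1 x) * ennreal (conv K f2 x) \<partial>lborel)"
    unfolding fd(3) by (rule nn_integral_density) (use fd conv_meas[OF hK d2] in auto)
  also have "\<dots> = (\<integral>\<^sup>+ x. ennreal (f1 x * conv K f2 x) \<partial>lborel)"
    by (intro nn_integral_cong) (simp add: ennreal_mult fd(2) conv_nonneg[OF hK d2])
  finally show ?thesis .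
qed

lemma integrand_meas:
  assumes hK: "hyp_K K DK HK lam CK" and hF1: "hyp_F F1 F1' F1''" and hF2: "hyp_F F2 F2' F2''"
    and hh: "hyp_h h Dh Hh" and d1: "is_dens \<mu> f1" and d2: "is_dens \<nu> f2"
  shows "(\<lambda>x. F1 (f1 x)) \<in> borel_measurable lborel" "(\<lambda>x. F2 (f2 x)) \<in> borel_measurable lborel"
    "(\<lambda>x. h (f1 x, f2 x)) \<in> borel_measurable lborel"
    "(\<lambda>x. f1 x * conv K f2 x) \<in> borel_measurable lborel"
    "integrand F1 F2 h K e f1 f2 \<in> borel_measurable lborel"
proof -
  note a = dens_props[OF d1] and b = dens_props[OF d2]
  show m1: "(\<lambda>x. F1 (f1 x)) \<in> borel_measurable lborel"
    by (rule meas_comp_nonneg[OF F_props(1)[OF hF1] a(1) a(2)])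
  show m2: "(\<lambda>x. F2 (f2 x)) \<in> borel_measurable lborel"
    by (rule meas_comp_nonneg[OF F_props(1)[OF hF2] b(1) b(2)])
  show m3: "(\<lambda>x. h (f1 x, f2 x)) \<in> borel_measurable lborel"
    by (rule meas_h[OF hh a(1) b(1) a(2) b(2)])
  show m4: "(\<lambda>x. f1 x * conv K f2 x) \<in> borel_measurable lborel"
    by (intro borel_measurable_times a(1) conv_meas[OF hK d2])
  show "integrand F1 F2 h K e f1 f2 \<in> borel_measurable lborel"
    unfolding integrand_def[abs_def]
    by (intro borel_measurable_add borel_measurable_times m1 m2 m3 m4 borel_measurable_const)
qed

lemma integrand_AE:
  assumes hK: "hyp_K K DK HK lam CK"
    and d1: "is_dens \<mu> f1" and d2: "is_dens \<nu> f2" and g1: "is_dens \<mu> g1" and g2: "is_dens \<nu> g2"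
  shows "AE x in lborel. integrand F1 F2 h K e f1 f2 x = integrand F1 F2 h K e g1 g2 x"
proof -
  have c: "conv K f2 x = conv K g2 x" for x using conv_eq[OF hK d2] conv_eq[OF hK g2] by simp
  have "AE x in lborel. f1 x = g1 x" by (rule dens_unique[OF d1 g1])
  moreover have "AE x in lborel. f2 x = g2 x" by (rule dens_unique[OF d2 g2])
  ultimately show ?thesis by eventually_elim (simp add: integrand_def c)
qed

lemma energy_eq:
  assumes hK: "hyp_K K DK HK lam CK" and hF1: "hyp_F F1 F1' F1''" and hF2: "hyp_F F2 F2' F2''"
    and hh: "hyp_h h Dh Hh" and d1: "is_dens \<mu> f1" and d2: "is_dens \<nu> f2"
  shows "energy F1 F2 h K e (\<mu>, \<nu>) = (if integrable lborel (integrand F1 F2 h K e f1 f2)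
      then ereal (\<integral>x. integrand F1 F2 h K e f1 f2 x \<partial>lborel) else \<infinity>)"
proof -
  define Q where "Q = (\<lambda>(g1, g2). is_dens \<mu> g1 \<and> is_dens \<nu> g2 \<and> integrable lborel (integrand F1 F2 h K e g1 g2))"
  have E: "energy F1 F2 h K e (\<mu>, \<nu>) = (if \<exists>g1 g2. Q (g1, g2) then
      (let (g1, g2) = Eps Q in ereal (\<integral>x. integrand F1 F2 h K e g1 g2 x \<partial>lborel)) else \<infinity>)"
    unfolding energy_def Q_def by (simp; blast)
  note M = integrand_meas[OF hK hF1 hF2 hh]
  show ?thesis
  proof (cases "integrable lborel (integrand F1 F2 h K e f1 f2)")
    case True
    then have q: "Q (f1, f2)" using d1 d2 by (simp add: Q_def)
    then have "Q (Eps Q)" by (rule someI)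
    moreover obtain g1 g2 where eq: "Eps Q = (g1, g2)" by (cases "Eps Q")
    ultimately have g: "is_dens \<mu> g1" "is_dens \<nu> g2" by (auto simp: Q_def)
    have "(\<integral>x. integrand F1 F2 h K e g1 g2 x \<partial>lborel) = (\<integral>x. integrand F1 F2 h K e f1 f2 x \<partial>lborel)"
      by (rule integral_cong_AE[OF M(5)[OF g] M(5)[OF d1 d2] integrand_AE[OF hK g d1 d2]])
    then show ?thesis using q True unfolding E eq by auto
  next
    case False
    have "\<not> Q (g1, g2)" for g1 g2
    proof
      assume "Q (g1, g2)"
      then have g: "is_dens \<mu> g1" "is_dens \<nu> g2" "integrable lborel (integrand F1 F2 h K e g1 g2)"
        by (auto simp: Q_def)
      have "integrable lborel (integrand F1 F2 h K e f1 f2)"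
        by (rule integrable_cong_AE_imp[OF g(3) M(5)[OF d1 d2] integrand_AE[OF hK g(1,2) d1 d2]])
      then show False using False by simp
    qed
    then show ?thesis using False unfolding E by auto
  qed
qed

locale setting =
  fixes K :: "'a::euclidean_space \<Rightarrow> real" and DK :: "'a \<Rightarrow> 'a" and HK :: "'a \<Rightarrow> 'a \<Rightarrow>\<^sub>L 'a"
    and lam CK :: real
    and F1 F1' F1'' F2 F2' F2'' :: "real \<Rightarrow> real"
    and h :: "real \<times> real \<Rightarrow> real" and Dh :: "real \<times> real \<Rightarrow> real \<times> real"
    and Hh :: "real \<times> real \<Rightarrow> (real \<times> real) \<Rightarrow>\<^sub>L (real \<times> real)"
    and e0 e :: real
  assumes hK: "hyp_K K DK HK lam CK"
    and hF1: "hyp_F F1 F1' F1''" and hF2: "hyp_F F2 F2' F2''"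
    and hh: "hyp_h h Dh Hh"
    and htheta: "hyp_theta F1' F1'' F2' F2'' Hh"
    and e0: "0 < e0" and cv: "convex_on quadrant (\<lambda>r. F1 (fst r) + F2 (snd r) + 2 * e0 * h r)"
    and e: "0 < e" "e \<le> e0"
begin

abbreviation "I f1 f2 \<equiv> integrand F1 F2 h K e f1 f2"
abbreviation "En p \<equiv> energy F1 F2 h K e p"

lemma pw:
  assumes d1: "is_dens \<mu> f1" and d2: "is_dens \<nu> f2"
  shows "0 \<le> F1 (f1 x)" "0 \<le> F2 (f2 x)" "0 \<le> f1 x * conv K f2 x"
    "F1 (f1 x) + F2 (f2 x) \<le> 2 * I f1 f2 x" "f1 x * conv K f2 x \<le> I f1 f2 x" "0 \<le> I f1 f2 x"
proof -
  note a = dens_props[OF d1] and b = dens_props[OF d2]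
  show F1: "0 \<le> F1 (f1 x)" using F_props(2)[OF hF1] a(2) by blast
  show F2: "0 \<le> F2 (f2 x)" using F_props(2)[OF hF2] b(2) by blast
  show c: "0 \<le> f1 x * conv K f2 x" using a(2) conv_nonneg[OF hK d2] by simp
  have q: "(f1 x, f2 x) \<in> quadrant" using a(2) b(2) by (simp add: quadrant_def)
  have L: "(F1 (f1 x) + F2 (f2 x)) / 2 \<le> F1 (f1 x) + F2 (f2 x) + e * h (f1 x, f2 x)"
    using Fh_lower[OF hF1 hF2 hh e0 cv e q] by simp
  show "F1 (f1 x) + F2 (f2 x) \<le> 2 * I f1 f2 x" using L c by (simp add: integrand_def)
  show "f1 x * conv K f2 x \<le> I f1 f2 x" using L F1 F2 by (simp add: integrand_def)
  show "0 \<le> I f1 f2 x" using L F1 F2 c by (simp add: integrand_def)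
qed

lemma energy_fin:
  assumes "En (\<mu>, \<nu>) \<noteq> \<infinity>"
  shows "\<exists>f1 f2. is_dens \<mu> f1 \<and> is_dens \<nu> f2 \<and> integrable lborel (I f1 f2)"
  using assms unfolding energy_def by (auto split: if_splits)

lemma energy_nonneg:
  shows "0 \<le> En (\<mu>, \<nu>)"
proof (cases "En (\<mu>, \<nu>) = \<infinity>")
  case False
  then obtain f1 f2 where f: "is_dens \<mu> f1" "is_dens \<nu> f2" "integrable lborel (I f1 f2)"
    using energy_fin by blast
  then show ?thesis using energy_eq[OF hK hF1 hF2 hh f(1,2)] pw(6)[OF f(1,2)]
    by (simp add: integral_nonneg_AE)
qed simp

lemma part1a:
  assumes d1: "is_dens \<mu> f1" and d2: "is_dens \<nu> f2"
  shows "enn2ereal (\<integral>\<^sup>+ x. ennreal (F1 (f1 x) + F2 (f2 x)) \<partial>lborel) \<le> 2 * En (\<mu>, \<nu>)"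
proof (cases "integrable lborel (I f1 f2)")
  case True
  have E: "En (\<mu>, \<nu>) = ereal (\<integral>x. I f1 f2 x \<partial>lborel)"
    using energy_eq[OF hK hF1 hF2 hh d1 d2] True by simp
  have nn: "0 \<le> (\<integral>x. I f1 f2 x \<partial>lborel)" using pw(6)[OF d1 d2] by (simp add: integral_nonneg_AE)
  have "(\<integral>\<^sup>+ x. ennreal (F1 (f1 x) + F2 (f2 x)) \<partial>lborel) \<le> (\<integral>\<^sup>+ x. ennreal (2 * I f1 f2 x) \<partial>lborel)"
    by (intro nn_integral_mono ennreal_leI pw(4)[OF d1 d2])
  also have "\<dots> = ennreal (\<integral>x. 2 * I f1 f2 x \<partial>lborel)"
    using pw(6)[OF d1 d2] by (intro nn_integral_eq_integral integrable_mult_right True) auto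
  also have "\<dots> = ennreal (2 * (\<integral>x. I f1 f2 x \<partial>lborel))" by simp
  finally have "enn2ereal (\<integral>\<^sup>+ x. ennreal (F1 (f1 x) + F2 (f2 x)) \<partial>lborel)
      \<le> enn2ereal (ennreal (2 * (\<integral>x. I f1 f2 x \<partial>lborel)))"
    by (simp add: less_eq_ennreal.rep_eq)
  then show ?thesis using nn unfolding E by simp
next
  case False
  then have "En (\<mu>, \<nu>) = \<infinity>" using energy_eq[OF hK hF1 hF2 hh d1 d2] by simp
  then show ?thesis by simp
qed

lemma part1b:
  assumes P: "P2 \<nu>"
  shows "enn2ereal (inter K \<mu> \<nu>) \<le> En (\<mu>, \<nu>)"
proof (cases "En (\<mu>, \<nu>) = \<infinity>")
  case False
  then obtain f1 f2 where f: "is_dens \<mu> f1" "is_dens \<nu> f2" "integrable lborel (I f1 f2)"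
    using energy_fin by blast
  have E: "En (\<mu>, \<nu>) = ereal (\<integral>x. I f1 f2 x \<partial>lborel)"
    using energy_eq[OF hK hF1 hF2 hh f(1,2)] f(3) by simp
  have nn: "0 \<le> (\<integral>x. I f1 f2 x \<partial>lborel)" using pw(6)[OF f(1,2)] by (simp add: integral_nonneg_AE)
  have "inter K \<mu> \<nu> = (\<integral>\<^sup>+ x. ennreal (f1 x * conv K f2 x) \<partial>lborel)"
    by (rule inter_dens[OF hK f(1,2) P])
  also have "\<dots> \<le> (\<integral>\<^sup>+ x. ennreal (I f1 f2 x) \<partial>lborel)"
    by (intro nn_integral_mono ennreal_leI pw(5)[OF f(1,2)])
  also have "\<dots> = ennreal (\<integral>x. I f1 f2 x \<partial>lborel)"
    using pw(6)[OF f(1,2)] by (intro nn_integral_eq_integral f(3)) auto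
  finally have "enn2ereal (inter K \<mu> \<nu>) \<le> enn2ereal (ennreal (\<integral>x. I f1 f2 x \<partial>lborel))"
    by (simp add: less_eq_ennreal.rep_eq)
  then show ?thesis using nn unfolding E by simp
qed simp

end

context setting begin

lemma I_eq: "I f1 f2 = (\<lambda>x. F1 (f1 x) + F2 (f2 x) + e * h (f1 x, f2 x) + f1 x * conv K f2 x)"
  by (simp add: fun_eq_iff integrand_def)

lemma part1c_dir1:
  assumes B: "\<forall>p\<in>S. En p \<le> ereal C"
  shows "\<exists>C::real. \<forall>p\<in>S. \<exists>f1 f2. is_dens (fst p) f1 \<and> is_dens (snd p) f2 \<and>
           integrable lborel (\<lambda>x. F1 (f1 x)) \<and> integrable lborel (\<lambda>x. F2 (f2 x)) \<and>
           integrable lborel (\<lambda>x. f1 x * conv K f2 x) \<and>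
           (\<integral>x. F1 (f1 x) \<partial>lborel) \<le> C \<and> (\<integral>x. F2 (f2 x) \<partial>lborel) \<le> C \<and>
           (\<integral>x. f1 x * conv K f2 x \<partial>lborel) \<le> C"
proof (intro exI[of _ "2 * \<bar>C\<bar>"] ballI)
  fix p assume pS: "p \<in> S"
  obtain \<mu> \<nu> where p: "p = (\<mu>, \<nu>)" by (cases p)
  have le: "En (\<mu>, \<nu>) \<le> ereal C" using B pS p by auto
  then have "En (\<mu>, \<nu>) \<noteq> \<infinity>" by auto
  then obtain f1 f2 where f: "is_dens \<mu> f1" "is_dens \<nu> f2" "integrable lborel (I f1 f2)"
    using energy_fin by blast
  have E: "En (\<mu>, \<nu>) = ereal (\<integral>x. I f1 f2 x \<partial>lborel)"
    using energy_eq[OF hK hF1 hF2 hh f(1,2)] f(3) by simp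
  have IC: "(\<integral>x. I f1 f2 x \<partial>lborel) \<le> C" using le E by simp
  note M = integrand_meas[OF hK hF1 hF2 hh f(1,2)]
  note W = pw[OF f(1,2)]
  have i2: "integrable lborel (\<lambda>x. 2 * I f1 f2 x)" by (intro integrable_mult_right f(3))
  have int1: "integrable lborel (\<lambda>x. F1 (f1 x))"
  proof (rule Bochner_Integration.integrable_bound[OF i2 M(1)])
    show "AE x in lborel. norm (F1 (f1 x)) \<le> norm (2 * I f1 f2 x)"
      using W by (intro always_eventually allI) (smt (verit) real_norm_def)
  qed
  have int2: "integrable lborel (\<lambda>x. F2 (f2 x))"
  proof (rule Bochner_Integration.integrable_bound[OF i2 M(2)])
    show "AE x in lborel. norm (F2 (f2 x)) \<le> norm (2 * I f1 f2 x)"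
      using W by (intro always_eventually allI) (smt (verit) real_norm_def)
  qed
  have int3: "integrable lborel (\<lambda>x. f1 x * conv K f2 x)"
  proof (rule Bochner_Integration.integrable_bound[OF f(3) M(4)])
    show "AE x in lborel. norm (f1 x * conv K f2 x) \<le> norm (I f1 f2 x)"
      using W by (intro always_eventually allI) (smt (verit) real_norm_def)
  qed
  have "(\<integral>x. F1 (f1 x) \<partial>lborel) \<le> (\<integral>x. 2 * I f1 f2 x \<partial>lborel)"
    using W by (intro integral_mono int1 i2) (smt (verit))
  moreover have "(\<integral>x. F2 (f2 x) \<partial>lborel) \<le> (\<integral>x. 2 * I f1 f2 x \<partial>lborel)"
    using W by (intro integral_mono int2 i2) (smt (verit))
  moreover have "(\<integral>x. f1 x * conv K f2 x \<partial>lborel) \<le> (\<integral>x. I f1 f2 x \<partial>lborel)"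
    using W by (intro integral_mono int3 f(3))
  moreover have "(\<integral>x. 2 * I f1 f2 x \<partial>lborel) = 2 * (\<integral>x. I f1 f2 x \<partial>lborel)" by simp
  ultimately show "\<exists>f1 f2. is_dens (fst p) f1 \<and> is_dens (snd p) f2 \<and>
           integrable lborel (\<lambda>x. F1 (f1 x)) \<and> integrable lborel (\<lambda>x. F2 (f2 x)) \<and>
           integrable lborel (\<lambda>x. f1 x * conv K f2 x) \<and>
           (\<integral>x. F1 (f1 x) \<partial>lborel) \<le> 2 * \<bar>C\<bar> \<and> (\<integral>x. F2 (f2 x) \<partial>lborel) \<le> 2 * \<bar>C\<bar> \<and>
           (\<integral>x. f1 x * conv K f2 x \<partial>lborel) \<le> 2 * \<bar>C\<bar>"
    using p f int1 int2 int3 IC by (intro exI[of _ f1] exI[of _ f2]) auto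
qed

lemma part1c_dir2:
  assumes B: "\<forall>p\<in>S. \<exists>f1 f2. is_dens (fst p) f1 \<and> is_dens (snd p) f2 \<and>
           integrable lborel (\<lambda>x. F1 (f1 x)) \<and> integrable lborel (\<lambda>x. F2 (f2 x)) \<and>
           integrable lborel (\<lambda>x. f1 x * conv K f2 x) \<and>
           (\<integral>x. F1 (f1 x) \<partial>lborel) \<le> C \<and> (\<integral>x. F2 (f2 x) \<partial>lborel) \<le> C \<and>
           (\<integral>x. f1 x * conv K f2 x \<partial>lborel) \<le> C"
  shows "\<exists>C::real. \<forall>p\<in>S. En p \<le> ereal C"
proof -
  obtain \<kappa> where kp: "0 < \<kappa>" and hb: "\<And>r. r \<in> quadrant \<Longrightarrow> \<bar>h r\<bar> \<le> \<kappa> * F1 (fst r)"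
    using h_bound[OF hF1 hF2 hh htheta] by blast
  show ?thesis
  proof (intro exI[of _ "(3 + e * \<kappa>) * C"] ballI)
    fix p assume pS: "p \<in> S"
    obtain \<mu> \<nu> where p: "p = (\<mu>, \<nu>)" by (cases p)
    obtain f1 f2 where f: "is_dens \<mu> f1" "is_dens \<nu> f2"
      and i: "integrable lborel (\<lambda>x. F1 (f1 x))" "integrable lborel (\<lambda>x. F2 (f2 x))"
           "integrable lborel (\<lambda>x. f1 x * conv K f2 x)"
      and b: "(\<integral>x. F1 (f1 x) \<partial>lborel) \<le> C" "(\<integral>x. F2 (f2 x) \<partial>lborel) \<le> C"
           "(\<integral>x. f1 x * conv K f2 x \<partial>lborel) \<le> C"
      using B pS p by force
    note M = integrand_meas[OF hK hF1 hF2 hh f(1,2)]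
    note a1 = dens_props[OF f(1)] and a2 = dens_props[OF f(2)]
    have hx: "\<bar>h (f1 x, f2 x)\<bar> \<le> \<kappa> * F1 (f1 x)" for x
      using hb[of "(f1 x, f2 x)"] a1(2) a2(2) by (simp add: quadrant_def)
    have iK: "integrable lborel (\<lambda>x. \<kappa> * F1 (f1 x))" by (intro integrable_mult_right i(1))
    have ih: "integrable lborel (\<lambda>x. h (f1 x, f2 x))"
    proof (rule Bochner_Integration.integrable_bound[OF iK M(3)])
      show "AE x in lborel. norm (h (f1 x, f2 x)) \<le> norm (\<kappa> * F1 (f1 x))"
        using hx by (intro always_eventually allI) (smt (verit) real_norm_def)
    qed
    have ie: "integrable lborel (\<lambda>x. e * h (f1 x, f2 x))" by (intro integrable_mult_right ih)
    have iI: "integrable lborel (I f1 f2)"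
      unfolding I_eq by (intro Bochner_Integration.integrable_add i ie)
    have "(\<integral>x. I f1 f2 x \<partial>lborel) = (\<integral>x. F1 (f1 x) \<partial>lborel) + (\<integral>x. F2 (f2 x) \<partial>lborel)
        + e * (\<integral>x. h (f1 x, f2 x) \<partial>lborel) + (\<integral>x. f1 x * conv K f2 x \<partial>lborel)"
      unfolding I_eq using i ie ih by (simp add: Bochner_Integration.integral_add)
    moreover have "(\<integral>x. h (f1 x, f2 x) \<partial>lborel) \<le> (\<integral>x. \<kappa> * F1 (f1 x) \<partial>lborel)"
      using hx by (intro integral_mono ih iK) (smt (verit))
    moreover have "(\<integral>x. \<kappa> * F1 (f1 x) \<partial>lborel) = \<kappa> * (\<integral>x. F1 (f1 x) \<partial>lborel)" by simp
    ultimately have "(\<integral>x. I f1 f2 x \<partial>lborel) \<le> (3 + e * \<kappa>) * C"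
    proof -
      assume eq: "(\<integral>x. I f1 f2 x \<partial>lborel) = (\<integral>x. F1 (f1 x) \<partial>lborel) + (\<integral>x. F2 (f2 x) \<partial>lborel)
        + e * (\<integral>x. h (f1 x, f2 x) \<partial>lborel) + (\<integral>x. f1 x * conv K f2 x \<partial>lborel)"
        and hl: "(\<integral>x. h (f1 x, f2 x) \<partial>lborel) \<le> (\<integral>x. \<kappa> * F1 (f1 x) \<partial>lborel)"
        and kk: "(\<integral>x. \<kappa> * F1 (f1 x) \<partial>lborel) = \<kappa> * (\<integral>x. F1 (f1 x) \<partial>lborel)"
      have "e * (\<integral>x. h (f1 x, f2 x) \<partial>lborel) \<le> e * (\<kappa> * (\<integral>x. F1 (f1 x) \<partial>lborel))"
        using hl kk e by (intro mult_left_mono) auto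
      also have "\<dots> \<le> e * (\<kappa> * C)" using e kp b(1) by (intro mult_left_mono) auto
      finally show ?thesis using eq b by (simp add: algebra_simps)
    qed
    then show "En p \<le> ereal ((3 + e * \<kappa>) * C)"
      using energy_eq[OF hK hF1 hF2 hh f(1,2)] iI p by simp
  qed
qed

end

context setting begin

lemma dens_total:
  assumes d: "is_dens \<mu> f" and P: "P2 \<mu>"
  shows "(\<integral>\<^sup>+ x. ennreal (f x) \<partial>lborel) = 1"
proof -
  note a = dens_props[OF d]
  have "emeasure \<mu> (space \<mu>) = 1" using P2_basic(1)[OF P] by (simp add: prob_space.emeasure_space_1)
  moreover have "emeasure \<mu> (space \<mu>) = (\<integral>\<^sup>+ x. ennreal (f x) * indicator UNIV x \<partial>lborel)"
    unfolding a(3) using a(1) by (simp add: emeasure_density)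
  ultimately show ?thesis by simp
qed

lemma alpha_pos:
  assumes hF: "hyp_F F F' F''" and A: "\<forall>r\<ge>0. F' r \<le> \<alpha> * (min 1 r + F r)"
  shows "0 < \<alpha>"
proof (rule ccontr)
  assume "\<not> 0 < \<alpha>"
  moreover have "0 < F' 1" using F_props(5)[OF hF] by simp
  moreover have "0 \<le> F 1" using F_props(2)[OF hF] by simp
  moreover have "F' 1 \<le> \<alpha> * (1 + F 1)" using A[rule_format, of 1] by simp
  ultimately show False by (smt (verit) mult_nonpos_nonneg)
qed

lemma part2_one:
  assumes hF: "hyp_F F F' F''" and A: "\<forall>r\<ge>0. F' r \<le> \<alpha> * (min 1 r + F r)"
    and d1: "is_dens \<mu> f1" and P: "P2 \<mu>"
    and g: "g \<in> borel_measurable lborel" and gnn: "\<And>x. 0 \<le> g x"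
    and FG: "\<And>x. F (f1 x) \<le> g x"
    and Bd: "enn2ereal (\<integral>\<^sup>+ x. ennreal (g x) \<partial>lborel) \<le> 2 * E"
  shows "enn2ereal (\<integral>\<^sup>+ x. ennreal (F' (f1 x)) \<partial>lborel) \<le> ereal \<alpha> * (1 + 2 * E)"
proof -
  have ap: "0 < \<alpha>" by (rule alpha_pos[OF hF A])
  note a = dens_props[OF d1]
  have pt: "F' (f1 x) \<le> \<alpha> * f1 x + \<alpha> * g x" for x
  proof -
    have "F' (f1 x) \<le> \<alpha> * (min 1 (f1 x) + F (f1 x))" using A a(2) by auto
    also have "\<dots> \<le> \<alpha> * (f1 x + g x)" using ap FG[of x] by (intro mult_left_mono) auto
    finally show ?thesis by (simp add: algebra_simps)
  qed
  have "(\<integral>\<^sup>+ x. ennreal (F' (f1 x)) \<partial>lborel) \<le> (\<integral>\<^sup>+ x. ennreal \<alpha> * ennreal (f1 x) + ennreal \<alpha> * ennreal (g x) \<partial>lborel)"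
  proof (intro nn_integral_mono)
    fix x
    have "ennreal (F' (f1 x)) \<le> ennreal (\<alpha> * f1 x + \<alpha> * g x)" by (intro ennreal_leI pt)
    also have "\<dots> = ennreal \<alpha> * ennreal (f1 x) + ennreal \<alpha> * ennreal (g x)"
      using ap a(2) gnn by (simp add: ennreal_mult)
    finally show "ennreal (F' (f1 x)) \<le> ennreal \<alpha> * ennreal (f1 x) + ennreal \<alpha> * ennreal (g x)" .
  qed
  also have "\<dots> = ennreal \<alpha> * (\<integral>\<^sup>+ x. ennreal (f1 x) \<partial>lborel) + ennreal \<alpha> * (\<integral>\<^sup>+ x. ennreal (g x) \<partial>lborel)"
    using a(1) g by (simp add: nn_integral_add nn_integral_cmult)
  also have "\<dots> = ennreal \<alpha> * (1 + (\<integral>\<^sup>+ x. ennreal (g x) \<partial>lborel))"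
    using dens_total[OF d1 P] by (simp add: distrib_left)
  finally have le: "enn2ereal (\<integral>\<^sup>+ x. ennreal (F' (f1 x)) \<partial>lborel)
      \<le> enn2ereal (ennreal \<alpha> * (1 + (\<integral>\<^sup>+ x. ennreal (g x) \<partial>lborel)))"
    by (simp add: less_eq_ennreal.rep_eq)
  also have "\<dots> = ereal \<alpha> * (1 + enn2ereal (\<integral>\<^sup>+ x. ennreal (g x) \<partial>lborel))"
    using ap by (simp add: times_ennreal.rep_eq plus_ennreal.rep_eq one_ennreal.rep_eq)
  also have "\<dots> \<le> ereal \<alpha> * (1 + 2 * E)"
    using ap Bd by (intro ereal_mult_left_mono add_left_mono) auto
  finally show ?thesis .
qed

end

theorem lemma2p5:
  fixes K :: "'a::euclidean_space \<Rightarrow> real"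
    and DK :: "'a \<Rightarrow> 'a" and HK :: "'a \<Rightarrow> 'a \<Rightarrow>\<^sub>L 'a"
    and lam CK :: real
    and F1 F1' F1'' F2 F2' F2'' :: "real \<Rightarrow> real"
    and h :: "real \<times> real \<Rightarrow> real" and Dh :: "real \<times> real \<Rightarrow> real \<times> real"
    and Hh :: "real \<times> real \<Rightarrow> (real \<times> real) \<Rightarrow>\<^sub>L (real \<times> real)"
    and \<epsilon>0 \<epsilon> :: real
    and \<rho>1 \<rho>2 :: "'a measure"
    and S :: "('a measure \<times> 'a measure) set"
  assumes hK: "hyp_K K DK HK lam CK"
    and hF1: "hyp_F F1 F1' F1''" and hF2: "hyp_F F2 F2' F2''"
    and hh: "hyp_h h Dh Hh"
    and htheta: "hyp_theta F1' F1'' F2' F2'' Hh"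
    and eps0: "0 < \<epsilon>0" "convex_on quadrant (\<lambda>r. F1 (fst r) + F2 (snd r) + 2 * \<epsilon>0 * h r)"
    and eps: "0 < \<epsilon>" "\<epsilon> \<le> \<epsilon>0"
    and rho: "P2 \<rho>1" "P2 \<rho>2"
    and S: "\<forall>p\<in>S. P2 (fst p) \<and> P2 (snd p)"
  shows
    \<comment> \<open>(1)\<close>
    "(\<forall>f1 f2. is_dens \<rho>1 f1 \<and> is_dens \<rho>2 f2 \<longrightarrow>
        enn2ereal (\<integral>\<^sup>+ x. ennreal (F1 (f1 x) + F2 (f2 x)) \<partial>lborel)
          \<le> 2 * energy F1 F2 h K \<epsilon> (\<rho>1, \<rho>2))
     \<and> enn2ereal (inter K \<rho>1 \<rho>2) \<le> energy F1 F2 h K \<epsilon> (\<rho>1, \<rho>2)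
     \<and> ((\<exists>C::real. \<forall>p\<in>S. energy F1 F2 h K \<epsilon> p \<le> ereal C) \<longleftrightarrow>
        (\<exists>C::real. \<forall>p\<in>S. \<exists>f1 f2. is_dens (fst p) f1 \<and> is_dens (snd p) f2 \<and>
           integrable lborel (\<lambda>x. F1 (f1 x)) \<and> integrable lborel (\<lambda>x. F2 (f2 x)) \<and>
           integrable lborel (\<lambda>x. f1 x * conv K f2 x) \<and>
           (\<integral>x. F1 (f1 x) \<partial>lborel) \<le> C \<and> (\<integral>x. F2 (f2 x) \<partial>lborel) \<le> C \<and>
           (\<integral>x. f1 x * conv K f2 x \<partial>lborel) \<le> C))
    \<comment> \<open>(2)\<close>
    \<and> (\<forall>\<alpha>1 \<alpha>2 :: real. (\<forall>r\<ge>0. F1' r \<le> \<alpha>1 * (min 1 r + F1 r)) \<longrightarrow>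
       (\<forall>r\<ge>0. F2' r \<le> \<alpha>2 * (min 1 r + F2 r)) \<longrightarrow>
       (\<forall>f1 f2. is_dens \<rho>1 f1 \<and> is_dens \<rho>2 f2 \<longrightarrow>
          enn2ereal (\<integral>\<^sup>+ x. ennreal (F1' (f1 x)) \<partial>lborel)
            \<le> ereal \<alpha>1 * (1 + 2 * energy F1 F2 h K \<epsilon> (\<rho>1, \<rho>2)) \<and>
          enn2ereal (\<integral>\<^sup>+ x. ennreal (F2' (f2 x)) \<partial>lborel)
            \<le> ereal \<alpha>2 * (1 + 2 * energy F1 F2 h K \<epsilon> (\<rho>1, \<rho>2))))
    \<comment> \<open>(3)\<close>
    \<and> ((\<rho>1, \<rho>2) \<in> X0 \<longrightarrow>
       ereal (lam / 2 * (mom2 \<rho>1 + mom2 \<rho>2)) \<le> enn2ereal (inter K \<rho>1 \<rho>2) \<and>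
       enn2ereal (inter K \<rho>1 \<rho>2) \<le> ereal (CK * (mom2 \<rho>1 + mom2 \<rho>2)))
    \<and> (S \<subseteq> X0 \<longrightarrow>
       ((\<exists>C::real. \<forall>p\<in>S. inter K (fst p) (snd p) \<le> ennreal C) \<longleftrightarrow>
       (\<exists>C::real. \<forall>p\<in>S. mom2 (fst p) \<le> C \<and> mom2 (snd p) \<le> C)))"
proof -
  interpret setting K DK HK lam CK F1 F1' F1'' F2 F2' F2'' h Dh Hh \<epsilon>0 \<epsilon>
    by unfold_locales (use hK hF1 hF2 hh htheta eps0 eps in auto)
  have lam: "0 < lam" using hK unfolding hyp_K_def by blast
  have CK: "0 \<le> CK" by (rule K_cont(3)[OF hK])
  have p1a: "\<forall>f1 f2. is_dens \<rho>1 f1 \<and> is_dens \<rho>2 f2 \<longrightarrow>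
        enn2ereal (\<integral>\<^sup>+ x. ennreal (F1 (f1 x) + F2 (f2 x)) \<partial>lborel)
          \<le> 2 * energy F1 F2 h K \<epsilon> (\<rho>1, \<rho>2)"
    using part1a by blast
  have p1b: "enn2ereal (inter K \<rho>1 \<rho>2) \<le> energy F1 F2 h K \<epsilon> (\<rho>1, \<rho>2)"
    by (rule part1b[OF rho(2)])
  have p1c: "(\<exists>C::real. \<forall>p\<in>S. energy F1 F2 h K \<epsilon> p \<le> ereal C) \<longleftrightarrow>
        (\<exists>C::real. \<forall>p\<in>S. \<exists>f1 f2. is_dens (fst p) f1 \<and> is_dens (snd p) f2 \<and>
           integrable lborel (\<lambda>x. F1 (f1 x)) \<and> integrable lborel (\<lambda>x. F2 (f2 x)) \<and>
           integrable lborel (\<lambda>x. f1 x * conv K f2 x) \<and>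
           (\<integral>x. F1 (f1 x) \<partial>lborel) \<le> C \<and> (\<integral>x. F2 (f2 x) \<partial>lborel) \<le> C \<and>
           (\<integral>x. f1 x * conv K f2 x \<partial>lborel) \<le> C)"
  proof
    assume "\<exists>C::real. \<forall>p\<in>S. energy F1 F2 h K \<epsilon> p \<le> ereal C"
    then obtain C where "\<forall>p\<in>S. energy F1 F2 h K \<epsilon> p \<le> ereal C" by blast
    then show "\<exists>C::real. \<forall>p\<in>S. \<exists>f1 f2. is_dens (fst p) f1 \<and> is_dens (snd p) f2 \<and>
           integrable lborel (\<lambda>x. F1 (f1 x)) \<and> integrable lborel (\<lambda>x. F2 (f2 x)) \<and>
           integrable lborel (\<lambda>x. f1 x * conv K f2 x) \<and>
           (\<integral>x. F1 (f1 x) \<partial>lborel) \<le> C \<and> (\<integral>x. F2 (f2 x) \<partial>lborel) \<le> C \<and>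
           (\<integral>x. f1 x * conv K f2 x \<partial>lborel) \<le> C"
      by (rule part1c_dir1)
  next
    assume "\<exists>C::real. \<forall>p\<in>S. \<exists>f1 f2. is_dens (fst p) f1 \<and> is_dens (snd p) f2 \<and>
           integrable lborel (\<lambda>x. F1 (f1 x)) \<and> integrable lborel (\<lambda>x. F2 (f2 x)) \<and>
           integrable lborel (\<lambda>x. f1 x * conv K f2 x) \<and>
           (\<integral>x. F1 (f1 x) \<partial>lborel) \<le> C \<and> (\<integral>x. F2 (f2 x) \<partial>lborel) \<le> C \<and>
           (\<integral>x. f1 x * conv K f2 x \<partial>lborel) \<le> C"
    then obtain C where "\<forall>p\<in>S. \<exists>f1 f2. is_dens (fst p) f1 \<and> is_dens (snd p) f2 \<and>
           integrable lborel (\<lambda>x. F1 (f1 x)) \<and> integrable lborel (\<lambda>x. F2 (f2 x)) \<and>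
           integrable lborel (\<lambda>x. f1 x * conv K f2 x) \<and>
           (\<integral>x. F1 (f1 x) \<partial>lborel) \<le> C \<and> (\<integral>x. F2 (f2 x) \<partial>lborel) \<le> C \<and>
           (\<integral>x. f1 x * conv K f2 x \<partial>lborel) \<le> C" by blast
    then show "\<exists>C::real. \<forall>p\<in>S. energy F1 F2 h K \<epsilon> p \<le> ereal C" by (rule part1c_dir2)
  qed
  have p2: "\<forall>\<alpha>1 \<alpha>2 :: real. (\<forall>r\<ge>0. F1' r \<le> \<alpha>1 * (min 1 r + F1 r)) \<longrightarrow>
       (\<forall>r\<ge>0. F2' r \<le> \<alpha>2 * (min 1 r + F2 r)) \<longrightarrow>
       (\<forall>f1 f2. is_dens \<rho>1 f1 \<and> is_dens \<rho>2 f2 \<longrightarrow>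
          enn2ereal (\<integral>\<^sup>+ x. ennreal (F1' (f1 x)) \<partial>lborel)
            \<le> ereal \<alpha>1 * (1 + 2 * energy F1 F2 h K \<epsilon> (\<rho>1, \<rho>2)) \<and>
          enn2ereal (\<integral>\<^sup>+ x. ennreal (F2' (f2 x)) \<partial>lborel)
            \<le> ereal \<alpha>2 * (1 + 2 * energy F1 F2 h K \<epsilon> (\<rho>1, \<rho>2)))"
  proof (intro allI impI, elim conjE)
    fix \<alpha>1 \<alpha>2 :: real and f1 f2
    assume A1: "\<forall>r\<ge>0. F1' r \<le> \<alpha>1 * (min 1 r + F1 r)" and A2: "\<forall>r\<ge>0. F2' r \<le> \<alpha>2 * (min 1 r + F2 r)"
      and d1: "is_dens \<rho>1 f1" and d2: "is_dens \<rho>2 f2"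
    note M = integrand_meas[OF hK hF1 hF2 hh d1 d2]
    have gm: "(\<lambda>x. F1 (f1 x) + F2 (f2 x)) \<in> borel_measurable lborel"
      by (intro borel_measurable_add M(1) M(2))
    have gnn: "\<And>x. 0 \<le> F1 (f1 x) + F2 (f2 x)" using pw(1,2)[OF d1 d2] by (simp add: add_nonneg_nonneg)
    have B: "enn2ereal (\<integral>\<^sup>+ x. ennreal (F1 (f1 x) + F2 (f2 x)) \<partial>lborel) \<le> 2 * energy F1 F2 h K \<epsilon> (\<rho>1, \<rho>2)"
      by (rule part1a[OF d1 d2])
    show "enn2ereal (\<integral>\<^sup>+ x. ennreal (F1' (f1 x)) \<partial>lborel)
            \<le> ereal \<alpha>1 * (1 + 2 * energy F1 F2 h K \<epsilon> (\<rho>1, \<rho>2)) \<and>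
          enn2ereal (\<integral>\<^sup>+ x. ennreal (F2' (f2 x)) \<partial>lborel)
            \<le> ereal \<alpha>2 * (1 + 2 * energy F1 F2 h K \<epsilon> (\<rho>1, \<rho>2))"
    proof
      show "enn2ereal (\<integral>\<^sup>+ x. ennreal (F1' (f1 x)) \<partial>lborel)
            \<le> ereal \<alpha>1 * (1 + 2 * energy F1 F2 h K \<epsilon> (\<rho>1, \<rho>2))"
        by (rule part2_one[OF hF1 A1 d1 rho(1) gm gnn _ B]) (use pw(2)[OF d1 d2] in simp)
      show "enn2ereal (\<integral>\<^sup>+ x. ennreal (F2' (f2 x)) \<partial>lborel)
            \<le> ereal \<alpha>2 * (1 + 2 * energy F1 F2 h K \<epsilon> (\<rho>1, \<rho>2))"
        by (rule part2_one[OF hF2 A2 d2 rho(2) gm gnn _ B]) (use pw(1)[OF d1 d2] in simp)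
    qed
  qed
  have p3: "(\<rho>1, \<rho>2) \<in> X0 \<longrightarrow>
       ereal (lam / 2 * (mom2 \<rho>1 + mom2 \<rho>2)) \<le> enn2ereal (inter K \<rho>1 \<rho>2) \<and>
       enn2ereal (inter K \<rho>1 \<rho>2) \<le> ereal (CK * (mom2 \<rho>1 + mom2 \<rho>2))"
  proof
    assume "(\<rho>1, \<rho>2) \<in> X0"
    then have m: "mom1 \<rho>1 + mom1 \<rho>2 = 0" by (simp add: X0_def)
    have nn1: "0 \<le> lam / 2 * (mom2 \<rho>1 + mom2 \<rho>2)"
      using lam mom2_nonneg[of \<rho>1] mom2_nonneg[of \<rho>2] by simp
    have nn2: "0 \<le> CK * (mom2 \<rho>1 + mom2 \<rho>2)"
      using CK mom2_nonneg[of \<rho>1] mom2_nonneg[of \<rho>2] by simp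
    have "enn2ereal (ennreal (lam / 2 * (mom2 \<rho>1 + mom2 \<rho>2))) \<le> enn2ereal (inter K \<rho>1 \<rho>2)"
      using inter_lower[OF hK rho(1) rho(2) m] by (simp add: less_eq_ennreal.rep_eq)
    moreover have "enn2ereal (inter K \<rho>1 \<rho>2) \<le> enn2ereal (ennreal (CK * (mom2 \<rho>1 + mom2 \<rho>2)))"
      using inter_upper[OF hK rho(1) rho(2)] by (simp add: less_eq_ennreal.rep_eq)
    ultimately show "ereal (lam / 2 * (mom2 \<rho>1 + mom2 \<rho>2)) \<le> enn2ereal (inter K \<rho>1 \<rho>2) \<and>
       enn2ereal (inter K \<rho>1 \<rho>2) \<le> ereal (CK * (mom2 \<rho>1 + mom2 \<rho>2))"
      using nn1 nn2 by simp
  qed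
  have p4: "S \<subseteq> X0 \<longrightarrow>
       ((\<exists>C::real. \<forall>p\<in>S. inter K (fst p) (snd p) \<le> ennreal C) \<longleftrightarrow>
       (\<exists>C::real. \<forall>p\<in>S. mom2 (fst p) \<le> C \<and> mom2 (snd p) \<le> C))"
  proof
    assume SX: "S \<subseteq> X0"
    have X: "P2 (fst p)" "P2 (snd p)" "mom1 (fst p) + mom1 (snd p) = 0" if "p \<in> S" for p
      using SX that by (auto simp: X0_def)
    show "(\<exists>C::real. \<forall>p\<in>S. inter K (fst p) (snd p) \<le> ennreal C) \<longleftrightarrow>
       (\<exists>C::real. \<forall>p\<in>S. mom2 (fst p) \<le> C \<and> mom2 (snd p) \<le> C)"
    proof
      assume "\<exists>C::real. \<forall>p\<in>S. inter K (fst p) (snd p) \<le> ennreal C"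
      then obtain C where C: "\<forall>p\<in>S. inter K (fst p) (snd p) \<le> ennreal C" by blast
      show "\<exists>C::real. \<forall>p\<in>S. mom2 (fst p) \<le> C \<and> mom2 (snd p) \<le> C"
      proof (intro exI[of _ "2 * max C 0 / lam"] ballI)
        fix p assume pS: "p \<in> S"
        have "ennreal (lam / 2 * (mom2 (fst p) + mom2 (snd p))) \<le> ennreal C"
          using inter_lower[OF hK X[OF pS]] C pS by (blast intro: order_trans)
        then have "lam / 2 * (mom2 (fst p) + mom2 (snd p)) \<le> max C 0"
          by (auto simp: ennreal_le_iff2)
        then have "mom2 (fst p) + mom2 (snd p) \<le> 2 * max C 0 / lam"
          using lam by (simp add: field_simps)
        then show "mom2 (fst p) \<le> 2 * max C 0 / lam \<and> mom2 (snd p) \<le> 2 * max C 0 / lam"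
          using mom2_nonneg[of "fst p"] mom2_nonneg[of "snd p"] by linarith
      qed
    next
      assume "\<exists>C::real. \<forall>p\<in>S. mom2 (fst p) \<le> C \<and> mom2 (snd p) \<le> C"
      then obtain C where C: "\<forall>p\<in>S. mom2 (fst p) \<le> C \<and> mom2 (snd p) \<le> C" by blast
      show "\<exists>C::real. \<forall>p\<in>S. inter K (fst p) (snd p) \<le> ennreal C"
      proof (intro exI[of _ "CK * (2 * C)"] ballI)
        fix p assume pS: "p \<in> S"
        have "inter K (fst p) (snd p) \<le> ennreal (CK * (mom2 (fst p) + mom2 (snd p)))"
          by (rule inter_upper[OF hK X(1,2)[OF pS]])
        also have "\<dots> \<le> ennreal (CK * (2 * C))"
          using C pS CK by (intro ennreal_leI mult_left_mono) auto
        finally show "inter K (fst p) (snd p) \<le> ennreal (CK * (2 * C))" .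
      qed
    qed
  qed
  show ?thesis using p1a p1b p1c p2 p3 p4 by blast
qed

end
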